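(* Let $\mathcal T$ be $\Lambda$-admissible. For all $E\in\mathcal T$, $$\sum_{\boldsymbol x\in\mathcal H_E}d^2(v,\boldsymbol x)\lesssim|v-\mathcal I_Ev|^2_{1,E}\lesssim\sum_{\boldsymbol x\in\mathcal H_E}d^2(v,\boldsymbol x)\qquad\forall v\in\mathbb V_E,$$ with hidden constants depending only on $\Lambda$ (and on $\mathcal T_0$, $c_s$, $C_s$), not on $E$ or $\mathcal T$.
   Context: Setting. $\Omega\subset\mathbb R^2$ polygonal, $\mathcal T_0$ a fixed conforming triangulation; $\mathcal T$ is obtained by finitely many newest-vertex bisections (possibly with hanging nodes). Nodes are vertices of triangles of $\mathcal T$; a hanging node $\boldsymbol z$ was created as the midpoint of an edge of a triangle of an earlier partition, whose endpoints are denoted $\boldsymbol z',\boldsymbol z''$. Global index: $0$ at proper nodes (vertices of all triangles containing them), $\max(\lambda(\boldsymbol z'),\lambda(\boldsymbol z''))+1$ at hanging nodes; $\Lambda$-admissible means all indices $\le\Lambda$. For $E\in\mathcal T$: $\mathcal N_E$ = nodes on $\partial E$, $\mathcal V_E$ = the three vertices of $E$, $\mathcal H_E=\mathcal N_E\setminus\mathcal V_E$. $\mathbb V_E\subset C^0(\overline E)\cap H^1(E)$: dimension $|\mathcal N_E|$, contains $\mathbb P_1(E)$, traces exactly the continuous functions on $\partial E$ affine between consecutive nodes of $\mathcal N_E$. Stability assumption: with $s_E(v,w)=\sum_{\boldsymbol x\in\mathcal N_E}v(\boldsymbol x)w(\boldsymbol x)$, $c_s|w|^2_{1,E}\le s_E(w,w)\le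 C_s|w|^2_{1,E}$ for all $w\in\mathbb V_E$ vanishing at $\mathcal V_E$. $\mathcal I_E$: Lagrange interpolation into $\mathbb P_1(E)$ at $\mathcal V_E$. Hierarchical details: $d(v,\boldsymbol z)=v(\boldsymbol z)$ for $\boldsymbol z\in\mathcal V_E$, and $d(v,\boldsymbol z)=v(\boldsymbol z)-\frac12(v(\boldsymbol z')+v(\boldsymbol z''))$ for $\boldsymbol z\in\mathcal H_E$. *)

theory Defs
  imports "HOL-Analysis.Analysis"
begin

type_synonym point = "real^2"

text \<open>A labelled triangle (p, q, r): r is the newest vertex, [p,q] the refinement edge.\<close>
type_synonym tri = "point \<times> point \<times> point"

definition verts :: "tri \<Rightarrow> point set" where
  "verts K = (case K of (p, q, r) \<Rightarrow> {p, q, r})"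

definition tri_hull :: "tri \<Rightarrow> point set" where
  "tri_hull K = convex hull (verts K)"

definition ref_mid :: "tri \<Rightarrow> point" where
  "ref_mid K = (case K of (p, q, r) \<Rightarrow> midpoint p q)"

definition bisect :: "tri \<Rightarrow> tri set" where
  "bisect K = (case K of (p, q, r) \<Rightarrow> {(r, p, midpoint p q), (q, r, midpoint p q)})"

definition ref_edge :: "tri \<Rightarrow> point \<times> point" where
  "ref_edge K = (case K of (p, q, r) \<Rightarrow> (p, q))"

definition initial_triangulation :: "tri set \<Rightarrow> bool" where
  "initial_triangulation T0 \<longleftrightarrow> finite T0 \<and> T0 \<noteq> {} \<and>
     (\<forall>K\<in>T0. \<not> collinear (verts K) \<and> card (verts K) = 3) \<and>
     (\<forall>K\<in>T0. \<forall>K'\<in>T0. K \<noteq> K' \<longrightarrow> verts K \<noteq> verts K' \<and>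
          tri_hull K \<inter> tri_hull K' = convex hull (verts K \<inter> verts K'))"

definition nodes :: "tri set \<Rightarrow> point set" where
  "nodes T = (\<Union>K\<in>T. verts K)"

text \<open>Partitions obtained from T0 by finitely many newest-vertex bisections (hanging nodes
  allowed), together with the parent map: when a new node z is created as the midpoint of
  the refinement edge [z',z''], we record par z = Some (z',z'').\<close>
inductive nvb_reach :: "tri set \<Rightarrow> tri set \<Rightarrow> (point \<Rightarrow> (point \<times> point) option) \<Rightarrow> bool"
  for T0 :: "tri set" where
  init: "nvb_reach T0 T0 (\<lambda>_. None)"
| step: "nvb_reach T0 T par \<Longrightarrow> K \<in> T \<Longrightarrow>
     nvb_reach T0 ((T - {K}) \<union> bisect K)
       (if ref_mid K \<in> nodes T then par else par(ref_mid K := Some (ref_edge K)))"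

definition proper_node :: "tri set \<Rightarrow> point \<Rightarrow> bool" where
  "proper_node T z \<longleftrightarrow> (\<forall>K\<in>T. z \<in> tri_hull K \<longrightarrow> z \<in> verts K)"

text \<open>idx_le T par k z  means: the global index of z is at most k.\<close>
inductive idx_le :: "tri set \<Rightarrow> (point \<Rightarrow> (point \<times> point) option) \<Rightarrow> nat \<Rightarrow> point \<Rightarrow> bool"
  for T par where
  proper: "proper_node T z \<Longrightarrow> idx_le T par k z"
| hanging: "\<not> proper_node T z \<Longrightarrow> par z = Some (z', z'') \<Longrightarrow>
     idx_le T par k z' \<Longrightarrow> idx_le T par k z'' \<Longrightarrow> idx_le T par (Suc k) z"

definition admissible :: "nat \<Rightarrow> tri set \<Rightarrow> (point \<Rightarrow> (point \<times> point) option) \<Rightarrow> bool" where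
  "admissible \<Lambda> T par \<longleftrightarrow> (\<forall>z\<in>nodes T. idx_le T par \<Lambda> z)"

definition elem_nodes :: "tri set \<Rightarrow> tri \<Rightarrow> point set" where
  "elem_nodes T E = nodes T \<inter> frontier (tri_hull E)"

definition hang_nodes :: "tri set \<Rightarrow> tri \<Rightarrow> point set" where
  "hang_nodes T E = elem_nodes T E - verts E"

text \<open>Convention: a function on the closed triangle is identified with its extension by 0.\<close>
definition restr :: "tri \<Rightarrow> (point \<Rightarrow> real) \<Rightarrow> point \<Rightarrow> real" where
  "restr E f = (\<lambda>x. if x \<in> tri_hull E then f x else 0)"

definition affine_fun :: "(point \<Rightarrow> real) \<Rightarrow> bool" where
  "affine_fun f \<longleftrightarrow> (\<exists>a b. \<forall>x. f x = inner a x + b)"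

definition P1 :: "tri \<Rightarrow> (point \<Rightarrow> real) set" where
  "P1 E = {restr E f | f. affine_fun f}"

definition interp :: "tri \<Rightarrow> (point \<Rightarrow> real) \<Rightarrow> point \<Rightarrow> real" where
  "interp E v = restr E (THE f. affine_fun f \<and> (\<forall>x\<in>verts E. f x = v x))"

definition detail :: "(point \<Rightarrow> (point \<times> point) option) \<Rightarrow> tri \<Rightarrow> (point \<Rightarrow> real) \<Rightarrow> point \<Rightarrow> real" where
  "detail par E v z = (if z \<in> verts E then v z else
     (case par z of Some (z', z'') \<Rightarrow> v z - (v z' + v z'') / 2 | None \<Rightarrow> v z))"

definition pderiv :: "2 \<Rightarrow> (point \<Rightarrow> real) \<Rightarrow> point \<Rightarrow> real" where
  "pderiv i \<phi> x = frechet_derivative \<phi> (at x) (axis i 1)"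

coinductive smooth_fun :: "(point \<Rightarrow> real) \<Rightarrow> bool" where
  "(\<forall>x. \<phi> differentiable (at x)) \<Longrightarrow> (\<forall>i::2. smooth_fun (pderiv i \<phi>)) \<Longrightarrow> smooth_fun \<phi>"

definition test_fun :: "point set \<Rightarrow> (point \<Rightarrow> real) \<Rightarrow> bool" where
  "test_fun U \<phi> \<longleftrightarrow> smooth_fun \<phi> \<and> compact (closure {x. \<phi> x \<noteq> 0})
      \<and> closure {x. \<phi> x \<noteq> 0} \<subseteq> U"

definition weak_grad :: "point set \<Rightarrow> (point \<Rightarrow> real) \<Rightarrow> (point \<Rightarrow> real^2) \<Rightarrow> bool" where
  "weak_grad U w g \<longleftrightarrow>
     set_borel_measurable lborel U w \<and> set_integrable lborel U (\<lambda>x. (w x)^2) \<and>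
     (\<forall>i::2. set_borel_measurable lborel U (\<lambda>x. g x $ i) \<and>
                 set_integrable lborel U (\<lambda>x. (g x $ i)^2)) \<and>
     (\<forall>\<phi> (i::2). test_fun U \<phi> \<longrightarrow>
        set_integrable lborel U (\<lambda>x. w x * pderiv i \<phi> x) \<and>
        set_integrable lborel U (\<lambda>x. g x $ i * \<phi> x) \<and>
        (LINT x:U|lborel. w x * pderiv i \<phi> x) = - (LINT x:U|lborel. g x $ i * \<phi> x))"

definition H1 :: "point set \<Rightarrow> (point \<Rightarrow> real) \<Rightarrow> bool" where
  "H1 U w \<longleftrightarrow> (\<exists>g. weak_grad U w g)"

definition h1_semi_sq :: "tri \<Rightarrow> (point \<Rightarrow> real) \<Rightarrow> real" where
  "h1_semi_sq E w = (THE s. \<exists>g. weak_grad (interior (tri_hull E)) w g \<and>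
      s = (LINT x:interior (tri_hull E)|lborel. (norm (g x))^2))"

definition consec :: "tri set \<Rightarrow> tri \<Rightarrow> point \<Rightarrow> point \<Rightarrow> bool" where
  "consec T E a b \<longleftrightarrow> a \<in> elem_nodes T E \<and> b \<in> elem_nodes T E \<and> a \<noteq> b \<and>
     closed_segment a b \<subseteq> frontier (tri_hull E) \<and> open_segment a b \<inter> elem_nodes T E = {}"

definition pw_affine_bdry :: "tri set \<Rightarrow> tri \<Rightarrow> (point \<Rightarrow> real) \<Rightarrow> bool" where
  "pw_affine_bdry T E g \<longleftrightarrow> continuous_on (frontier (tri_hull E)) g \<and>
     (\<forall>a b. consec T E a b \<longrightarrow>
        (\<forall>t\<in>{0..1}. g ((1 - t) *\<^sub>R a + t *\<^sub>R b) = (1 - t) * g a + t * g b))"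

definition VE_space :: "tri set \<Rightarrow> tri \<Rightarrow> (point \<Rightarrow> real) set \<Rightarrow> bool" where
  "VE_space T E V \<longleftrightarrow>
     (\<forall>v\<in>V. \<forall>x. x \<notin> tri_hull E \<longrightarrow> v x = 0) \<and>
     (\<forall>v\<in>V. \<forall>w\<in>V. (\<lambda>x. v x + w x) \<in> V) \<and>
     (\<forall>v\<in>V. \<forall>c::real. (\<lambda>x. c * v x) \<in> V) \<and>
     (\<lambda>x. 0) \<in> V \<and>
     (\<forall>v\<in>V. continuous_on (tri_hull E) v \<and> H1 (interior (tri_hull E)) v) \<and>
     (\<exists>B. finite B \<and> B \<subseteq> V \<and> card B = card (elem_nodes T E) \<and>
        (\<forall>c. (\<forall>x. (\<Sum>b\<in>B. c b * b x) = 0) \<longrightarrow> (\<forall>b\<in>B. c b = 0)) \<and>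
        (\<forall>v\<in>V. \<exists>c. \<forall>x. v x = (\<Sum>b\<in>B. c b * b x))) \<and>
     P1 E \<subseteq> V \<and>
     (\<forall>v\<in>V. pw_affine_bdry T E v) \<and>
     (\<forall>g. pw_affine_bdry T E g \<longrightarrow> (\<exists>v\<in>V. \<forall>x\<in>frontier (tri_hull E). v x = g x))"

definition stab_form :: "tri set \<Rightarrow> tri \<Rightarrow> (point \<Rightarrow> real) \<Rightarrow> (point \<Rightarrow> real) \<Rightarrow> real" where
  "stab_form T E v w = (\<Sum>x\<in>elem_nodes T E. v x * w x)"

definition stability_assm :: "real \<Rightarrow> real \<Rightarrow> tri set \<Rightarrow> tri \<Rightarrow> (point \<Rightarrow> real) set \<Rightarrow> bool" where
  "stability_assm cs Cs T E V \<longleftrightarrow> (\<forall>w\<in>V. (\<forall>x\<in>verts E. w x = 0) \<longrightarrow>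
      cs * h1_semi_sq E w \<le> stab_form T E w w \<and> stab_form T E w w \<le> Cs * h1_semi_sq E w)"

end

theory Submission
  imports Defs
begin


definition cross :: "point \<Rightarrow> point \<Rightarrow> real" where
  "cross u w = u$1 * w$2 - u$2 * w$1"

lemma cross_simps:
  "cross (u + v) w = cross u w + cross v w"
  "cross u (v + w) = cross u v + cross u w"
  "cross (u - v) w = cross u w - cross v w"
  "cross u (v - w) = cross u v - cross u w"
  "cross (c *\<^sub>R u) w = c * cross u w"
  "cross u (c *\<^sub>R w) = c * cross u w"
  "cross u u = 0"
  "cross u 0 = 0" "cross 0 u = 0"
  by (auto simp: cross_def algebra_simps)

lemma cross_anti: "cross w u = - cross u w" by (simp add: cross_def)

lemma inner2: "(u::real^2) \<bullet> w = u$1*w$1 + u$2*w$2"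
  by (simp add: inner_vec_def sum_2)
lemma vec2_eq: "(u::real^2) = w \<longleftrightarrow> u$1 = w$1 \<and> u$2 = w$2"
  by (simp add: vec_eq_iff forall_2)

lemma cross0_parallel:
  fixes u w :: point
  assumes cc: "cross u w = 0" and w: "w \<noteq> 0"
  shows "u = ((u \<bullet> w) / (w \<bullet> w)) *\<^sub>R w"
proof -
  have "(w$1*w$1 + w$2*w$2) * u$1 = (u$1*w$1 + u$2*w$2) * w$1 + w$2 * (u$1 * w$2 - u$2 * w$1)"
    by (simp add: algebra_simps)
  moreover have "(w$1*w$1 + w$2*w$2) * u$2 = (u$1*w$1 + u$2*w$2) * w$2 - w$1 * (u$1 * w$2 - u$2 * w$1)"
    by (simp add: algebra_simps)
  ultimately have e: "(w \<bullet> w) *\<^sub>R u = (u \<bullet> w) *\<^sub>R w" using cc by (simp add: vec2_eq inner2 cross_def)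
  have w0: "w \<bullet> w \<noteq> 0" using w by simp
  have "u = inverse (w \<bullet> w) *\<^sub>R ((w \<bullet> w) *\<^sub>R u)" using w0 by simp
  also have "\<dots> = ((u \<bullet> w) / (w \<bullet> w)) *\<^sub>R w" using e by (simp add: field_simps)
  finally show ?thesis .
qed

lemma bary_shift: fixes a b c :: real and p q r x :: point
  assumes "a + b + c = 1" "x = a *\<^sub>R p + b *\<^sub>R q + c *\<^sub>R r"
  shows "x - p = b *\<^sub>R (q - p) + c *\<^sub>R (r - p)"
proof -
  have "a = 1 - b - c" using assms by simp
  then have "x = (1 - b - c) *\<^sub>R p + b *\<^sub>R q + c *\<^sub>R r" using assms(2) by simp
  then show ?thesis by (simp add: algebra_simps)
qed

lemma collinear_iff_cross:
  fixes p q r :: point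
  shows "collinear {p,q,r} \<longleftrightarrow> cross (q - p) (r - p) = 0"
proof
  assume "collinear {p,q,r}"
  then have "collinear {q,r,p}" by (simp add: insert_commute)
  then have "q = p \<or> (\<exists>u. r = u *\<^sub>R q + (1 - u) *\<^sub>R p)"
    by (simp add: collinear_3_expand)
  then show "cross (q - p) (r - p) = 0"
  proof
    assume "q = p" then show ?thesis by (simp add: cross_def)
  next
    assume "\<exists>u. r = u *\<^sub>R q + (1 - u) *\<^sub>R p"
    then obtain u where "r = u *\<^sub>R q + (1 - u) *\<^sub>R p" by blast
    then have "r - p = u *\<^sub>R (q - p)" by (simp add: algebra_simps)
    then show ?thesis by (simp add: cross_simps)
  qed
next
  assume c: "cross (q - p) (r - p) = 0"
  show "collinear {p,q,r}"
  proof (cases "q = p")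
    case True then show ?thesis by (simp add: collinear_2)
  next
    case False
    define t where "t = ((r - p) \<bullet> (q - p)) / ((q - p) \<bullet> (q - p))"
    have "r - p = t *\<^sub>R (q - p)"
      using cross0_parallel[of "r - p" "q - p"] c False cross_anti[of "q - p" "r - p"] unfolding t_def by simp
    then have "r = t *\<^sub>R q + (1 - t) *\<^sub>R p" by (simp add: algebra_simps)
    then have "collinear {q,r,p}" unfolding collinear_3_expand by blast
    then show ?thesis by (simp add: insert_commute)
  qed
qed


lemma tri_interior:
  assumes "\<not> collinear {p,q,r::point}"
  shows "interior (convex hull {p,q,r}) =
     {v. \<exists>x y z. 0 < x \<and> 0 < y \<and> 0 < z \<and> x + y + z = 1 \<and> x *\<^sub>R p + y *\<^sub>R q + z *\<^sub>R r = v}"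
  using interior_convex_hull_3_minimal[OF assms] by simp

lemma seg_not_interior:
  assumes nc: "\<not> collinear {p,q,r::point}" and x: "x \<in> closed_segment p q"
  shows "x \<notin> interior (convex hull {p,q,r})"
proof
  assume "x \<in> interior (convex hull {p,q,r})"
  then obtain a b c where abc: "0 < a" "0 < b" "0 < c" "a + b + c = 1" "x = a *\<^sub>R p + b *\<^sub>R q + c *\<^sub>R r"
    using tri_interior[OF nc] by auto
  have "x - p = b *\<^sub>R (q - p) + c *\<^sub>R (r - p)"
    using bary_shift abc by blast
  then have c1: "cross (q - p) (x - p) = c * cross (q - p) (r - p)"
    by (simp add: cross_simps)
  obtain t where "x = (1 - t) *\<^sub>R p + t *\<^sub>R q" using x by (auto simp: in_segment)
  then have "x - p = t *\<^sub>R (q - p)" by (simp add: algebra_simps)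
  then have "cross (q - p) (x - p) = 0" by (simp add: cross_simps)
  with c1 abc nc show False by (simp add: collinear_iff_cross)
qed

lemma tri_interior_ne:
  assumes nc: "\<not> collinear {p,q,r::point}"
  shows "interior (convex hull {p,q,r}) \<noteq> {}"
proof -
  have "(1/3) *\<^sub>R p + (1/3) *\<^sub>R q + (1/3) *\<^sub>R r \<in> interior (convex hull {p,q,r})"
    unfolding tri_interior[OF nc] by (rule CollectI, rule exI[of _ "1/3"], rule exI[of _ "1/3"], rule exI[of _ "1/3"]) simp
  then show ?thesis by blast
qed

lemma hull3_closed: "closed (convex hull {p,q,r::point})"
  by (simp add: compact_imp_closed finite_imp_compact_convex_hull)

lemma tri_closure_interior:
  assumes nc: "\<not> collinear {p,q,r::point}"
  shows "closure (interior (convex hull {p,q,r})) = convex hull {p,q,r}"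
  using convex_closure_interior[OF convex_convex_hull tri_interior_ne[OF nc]] hull3_closed
  by (simp add: closure_closed)

lemma seg_in_hull: "a \<in> S \<Longrightarrow> b \<in> S \<Longrightarrow> closed_segment a b \<subseteq> convex hull S"
  by (simp add: hull_subset segment_convex_hull subset_insertI2 hull_mono insert_subset)

lemma seg_frontier:
  assumes nc: "\<not> collinear {p,q,r::point}"
  shows "closed_segment p q \<subseteq> frontier (convex hull {p,q,r})"
proof
  fix x assume x: "x \<in> closed_segment p q"
  have "x \<in> convex hull {p,q,r}" using x seg_in_hull[of p "{p,q,r}" q] by auto
  then show "x \<in> frontier (convex hull {p,q,r})"
    using seg_not_interior[OF nc x] hull3_closed by (simp add: frontier_def closure_closed)
qed

lemma third_vertex:
  assumes "a \<in> {p,q,r}" "b \<in> {p,q,r}" "a \<noteq> b"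
  shows "\<exists>c. {p,q,r} = {a,b,c}"
  using assms by auto

lemma edge_frontier:
  assumes nc: "\<not> collinear {p,q,r::point}" and "a \<in> {p,q,r}" "b \<in> {p,q,r}" "a \<noteq> b"
  shows "closed_segment a b \<subseteq> frontier (convex hull {p,q,r})"
proof -
  obtain c where c: "{p,q,r} = {a,b,c}" using third_vertex assms by blast
  show ?thesis using seg_frontier[of a b c] nc unfolding c by blast
qed

lemma noncol_distinct:
  assumes nc: "\<not> collinear {p,q,r::point}" shows "p \<noteq> q \<and> q \<noteq> r \<and> p \<noteq> r"
  using nc by (cases "p=q"; cases "q=r"; cases "p=r") (auto simp: collinear_2 insert_commute)

lemma vertex_not_interior:
  assumes nc: "\<not> collinear {p,q,r::point}" and "a \<in> {p,q,r}"
  shows "a \<notin> interior (convex hull {p,q,r})"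
proof -
  have d: "p \<noteq> q" "q \<noteq> r" "p \<noteq> r" using noncol_distinct[OF nc] by auto
  obtain b where "b \<in> {p,q,r}" "b \<noteq> a" using assms d by (metis insertCI)
  then show ?thesis using edge_frontier[OF nc assms(2)] by (auto simp: frontier_def)
qed

lemma frontier_tri_open_edge:
  assumes nc: "\<not> collinear {p,q,r::point}" and z: "z \<in> frontier (convex hull {p,q,r})"
    and zv: "z \<notin> {p,q,r}"
  shows "z \<in> open_segment p q \<or> z \<in> open_segment q r \<or> z \<in> open_segment r p"
proof -
  have zh: "z \<in> convex hull {p,q,r}" using z hull3_closed by (simp add: frontier_def closure_closed)
  have zi: "z \<notin> interior (convex hull {p,q,r})" using z by (simp add: frontier_def)
  obtain u v w where uvw: "0 \<le> u" "0 \<le> v" "0 \<le> w" "u + v + w = 1" "z = u *\<^sub>R p + v *\<^sub>R q + w *\<^sub>R r"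
    using zh by (auto simp: convex_hull_3)
  have "\<not> (0 < u \<and> 0 < v \<and> 0 < w)"
    using zi uvw unfolding tri_interior[OF nc] by blast
  then consider "u = 0" | "v = 0" | "w = 0" using uvw by linarith
  then show ?thesis
  proof cases
    case 1
    then have "z \<in> closed_segment q r" using uvw by (auto simp: in_segment intro!: exI[of _ w])
    then show ?thesis using zv by (simp add: open_segment_def)
  next
    case 2
    then have "z \<in> closed_segment r p" using uvw by (auto simp: in_segment intro!: exI[of _ u])
    then show ?thesis using zv by (simp add: open_segment_def)
  next
    case 3
    then have "z \<in> closed_segment p q" using uvw by (auto simp: in_segment intro!: exI[of _ v])
    then show ?thesis using zv by (simp add: open_segment_def)
  qed
qed

lemma median_interior:
  assumes nc: "\<not> collinear {p,q,r::point}"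
  shows "open_segment r (midpoint p q) \<subseteq> interior (convex hull {p,q,r})"
proof
  fix x assume "x \<in> open_segment r (midpoint p q)"
  then obtain t where t: "0 < t" "t < 1" "x = (1 - t) *\<^sub>R r + t *\<^sub>R midpoint p q"
    by (auto simp: in_segment)
  have "x = (t/2) *\<^sub>R p + (t/2) *\<^sub>R q + (1 - t) *\<^sub>R r"
    using t(3) by (simp add: midpoint_def algebra_simps)
  then show "x \<in> interior (convex hull {p,q,r})"
    unfolding tri_interior[OF nc] using t by (intro CollectI exI[of _ "t/2"] exI[of _ "1-t"]) auto
qed

lemma tri_sep:
  assumes nc1: "\<not> collinear {p,q,r::point}" and nc2: "\<not> collinear {p',q',r'::point}"
    and disj: "interior (convex hull {p,q,r}) \<inter> interior (convex hull {p',q',r'}) = {}"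
  shows "\<exists>n \<beta>. n \<noteq> 0 \<and> (\<forall>x\<in>convex hull {p,q,r}. n \<bullet> x \<le> \<beta>) \<and> (\<forall>x\<in>convex hull {p',q',r'}. n \<bullet> x \<ge> \<beta>)"
proof -
  obtain n \<beta> where nb: "n \<noteq> 0" "\<forall>x\<in>interior (convex hull {p,q,r}). n \<bullet> x \<le> \<beta>"
      "\<forall>x\<in>interior (convex hull {p',q',r'}). n \<bullet> x \<ge> \<beta>"
    using separating_hyperplane_sets[OF convex_interior[OF convex_convex_hull] convex_interior[OF convex_convex_hull]
        tri_interior_ne[OF nc1] tri_interior_ne[OF nc2] disj] by blast
  have "closure (interior (convex hull {p,q,r})) \<subseteq> {x. n \<bullet> x \<le> \<beta>}"
    using nb(2) by (intro closure_minimal) (auto simp: closed_halfspace_le)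
  moreover have "closure (interior (convex hull {p',q',r'})) \<subseteq> {x. n \<bullet> x \<ge> \<beta>}"
    using nb(3) by (intro closure_minimal) (auto simp: closed_halfspace_ge)
  ultimately show ?thesis using nb(1) unfolding tri_closure_interior[OF nc1] tri_closure_interior[OF nc2] by blast
qed


definition dyr :: "real \<Rightarrow> real \<Rightarrow> bool" where
  "dyr s t \<longleftrightarrow> (\<exists>k j::nat. j < 2^k \<and> {s,t} = {real j / 2^k, real (j+1) / 2^k})"

lemma dyr_sym: "dyr s t \<Longrightarrow> dyr t s"
  unfolding dyr_def by (auto simp: insert_commute)

lemma dyr_01: "dyr 0 1"
  unfolding dyr_def by (rule exI[of _ 0], rule exI[of _ 0]) auto

lemma dyr_cases:
  assumes "dyr s t"
  obtains k j where "j < (2::nat)^k" "s = real j / 2^k \<and> t = real (j+1) / 2^k \<or> t = real j / 2^k \<and> s = real (j+1) / 2^k"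
  using assms unfolding dyr_def by (auto simp: doubleton_eq_iff)

lemma dyrI1:
  assumes "j < (2::nat)^k" "s = real j / 2^k" "t = real (j+1) / 2^k"
  shows "dyr s t"
  using assms unfolding dyr_def by (auto simp: doubleton_eq_iff)

lemma dyrI2:
  assumes "j < (2::nat)^k" "t = real j / 2^k" "s = real (j+1) / 2^k"
  shows "dyr s t"
  using dyrI1[OF assms] dyr_sym by blast

lemma realnat_le: "real a \<le> real b \<longleftrightarrow> a \<le> b" by simp
lemma realnat_less: "real a < real b \<longleftrightarrow> a < b" by simp

lemma dyr_bounds: "dyr s t \<Longrightarrow> 0 \<le> s \<and> s \<le> 1 \<and> 0 \<le> t \<and> t \<le> 1 \<and> s \<noteq> t"
proof (elim dyr_cases)
  fix k j :: nat assume j: "j < 2^k"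
  have "j + 1 \<le> 2^k" using j by simp
  then have "real (j+1) \<le> real (2^k)" by (simp only: realnat_le)
  then have r: "real j + 1 \<le> 2^k" by simp
  have p: "(0::real) < 2^k" by simp
  have "real j / 2^k \<le> 1" "real (j+1)/2^k \<le> 1" using r p j by (simp_all add: divide_le_eq)
  moreover have "real j / 2^k \<noteq> real (j+1)/2^k" by (simp add: divide_cancel_right)
  moreover assume "s = real j / 2^k \<and> t = real (j+1) / 2^k \<or> t = real j / 2^k \<and> s = real (j+1) / 2^k"
  ultimately show ?thesis by auto
qed

lemma dyr_flip: "dyr s t \<Longrightarrow> dyr (1 - s) (1 - t)"
proof (elim dyr_cases)
  fix k j :: nat assume j: "j < 2^k"
    and st: "s = real j / 2^k \<and> t = real (j+1) / 2^k \<or> t = real j / 2^k \<and> s = real (j+1) / 2^k"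
  define j' where "j' = 2^k - 1 - j"
  have j': "j' < 2^k" unfolding j'_def using j by simp
  have jj: "j' + 1 + j = 2^k" unfolding j'_def using j by simp
  then have "real (j' + 1 + j) = real (2^k)" by (simp only:)
  then have jr: "real j' + 1 + real j = 2^k" by simp
  have p: "(0::real) < 2^k" by simp
  have e1: "1 - real j / 2^k = real (j'+1) / 2^k" using jr p by (simp add: field_simps)
  have e2: "1 - real (j+1) / 2^k = real j' / 2^k" using jr p by (simp add: field_simps)
  from st show "dyr (1 - s) (1 - t)"
  proof
    assume "s = real j / 2^k \<and> t = real (j+1) / 2^k"
    then show ?thesis using e1 e2 by (intro dyrI2[OF j']) auto
  next
    assume "t = real j / 2^k \<and> s = real (j+1) / 2^k"
    then show ?thesis using e1 e2 by (intro dyrI1[OF j']) auto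
  qed
qed

lemma dyr_half: "dyr s t \<Longrightarrow> dyr s ((s + t) / 2)"
proof (elim dyr_cases)
  fix k j :: nat assume j: "j < 2^k"
    and st: "s = real j / 2^k \<and> t = real (j+1) / 2^k \<or> t = real j / 2^k \<and> s = real (j+1) / 2^k"
  then consider "s = real j / 2^k" "t = real (j+1) / 2^k" | "t = real j / 2^k" "s = real (j+1) / 2^k" by blast
  then show "dyr s ((s + t) / 2)"
  proof cases
    case 1
    have a: "2*j < 2^(Suc k)" using j by simp
    have e: "s = real (2*j) / 2^(Suc k)" "(s+t)/2 = real (2*j+1) / 2^(Suc k)"
      unfolding 1 by (simp_all add: field_simps)
    show ?thesis by (rule dyrI1[OF a e])
  next
    case 2
    have a: "2*j+1 < 2^(Suc k)" using j by simp
    have e: "s = real (2*j+1+1) / 2^(Suc k)" "(s+t)/2 = real (2*j+1) / 2^(Suc k)"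
      unfolding 2 by (simp_all add: field_simps)
    show ?thesis by (rule dyrI2[OF a e(2) e(1)])
  qed
qed

lemma pow2_odd: "(2::nat)^k = 2*j+1 \<Longrightarrow> k = 0"
proof (rule ccontr)
  assume a: "2^k = 2*j+1" "k \<noteq> 0"
  then obtain k' where "k = Suc k'" by (cases k) auto
  then have "2 * 2^k' = 2*j+1" using a by simp
  moreover have "\<forall>x::nat. 2*x \<noteq> 2*j+1" by presburger
  ultimately show False by blast
qed

lemma dyr_strad: "dyr s t \<Longrightarrow> s < 1/2 \<Longrightarrow> 1/2 < t \<Longrightarrow> s = 0 \<and> t = 1"
proof (elim dyr_cases)
  fix k j :: nat assume j: "j < 2^k"
    and st: "s = real j / 2^k \<and> t = real (j+1) / 2^k \<or> t = real j / 2^k \<and> s = real (j+1) / 2^k"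
    and s: "s < 1/2" and t: "1/2 < t"
  have p: "(0::real) < 2^k" by simp
  have "s < t" using s t by simp
  then have st': "s = real j / 2^k" "t = real (j+1) / 2^k" using st p by (auto simp: divide_less_cancel)
  have "2 * real j < 2^k" using s st' p by (simp add: field_simps)
  then have "real (2*j) < real (2^k)" by simp
  then have a: "2*j < 2^k" by (simp only: realnat_less)
  have "2^k < 2 * real j + 2" using t st' p by (simp add: field_simps)
  then have "real (2^k) < real (2*j+2)" by simp
  then have b: "2^k < 2*j+2" by (simp only: realnat_less)
  have e: "2^k = 2*j+1" using a b by simp
  then have k: "k = 0" by (rule pow2_odd)
  then have "j = 0" using e by simp
  then show "s = 0 \<and> t = 1" using st' k by simp
qed

lemma dyr_mid_lt: "dyr s t \<Longrightarrow> (s + t) / 2 < 1/2 \<Longrightarrow> s \<le> 1/2 \<and> t \<le> 1/2"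
proof (elim dyr_cases)
  fix k j :: nat assume j: "j < 2^k"
    and st: "s = real j / 2^k \<and> t = real (j+1) / 2^k \<or> t = real j / 2^k \<and> s = real (j+1) / 2^k"
    and m: "(s + t) / 2 < 1/2"
  have p: "(0::real) < 2^k" by simp
  have st1: "s + t = (2 * real j + 1) / 2^k" using st p by (auto simp: field_simps)
  have "s + t < 1" using m by simp
  then have "(2 * real j + 1) / 2^k < 1" using st1 by simp
  then have "2 * real j + 1 < 2^k" by (simp only: divide_less_eq_1_pos[OF p])
  then have "real (2*j+1) < real (2^k)" by simp
  then have a: "2*j+1 < 2^k" by (simp only: realnat_less)
  have "k \<noteq> 0" using a by (cases k) auto
  then have "even ((2::nat)^k)" by simp
  then have "2*j+2 \<le> 2^k" using a by presburger
  then have "real (2*j+2) \<le> real (2^k)" by (simp only: realnat_le)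
  then have "2 * real j + 2 \<le> 2^k" by simp
  then have "real (j+1) / 2^k \<le> 1/2" using p by (simp add: field_simps)
  moreover have "real j / 2^k \<le> real (j+1) / 2^k" by (simp add: divide_right_mono)
  ultimately show "s \<le> 1/2 \<and> t \<le> 1/2" using st by auto
qed

lemma dyr_scale: "dyr s t \<Longrightarrow> s \<le> 1/2 \<Longrightarrow> t \<le> 1/2 \<Longrightarrow> dyr (2 * s) (2 * t)"
proof (elim dyr_cases)
  fix k j :: nat assume j: "j < 2^k"
    and st: "s = real j / 2^k \<and> t = real (j+1) / 2^k \<or> t = real j / 2^k \<and> s = real (j+1) / 2^k"
    and s: "s \<le> 1/2" and t: "t \<le> 1/2"
  have p: "(0::real) < 2^k" by simp
  have "real (j+1) / 2^k \<le> 1/2" using st s t by auto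
  then have "2 * real j + 2 \<le> 2^k" using p by (simp add: field_simps)
  then have "real (2*j+2) \<le> real (2^k)" by simp
  then have a: "2*j+2 \<le> 2^k" by (simp only: realnat_le)
  then have "k \<noteq> 0" by (cases k) auto
  then obtain k' where k: "k = Suc k'" by (cases k) auto
  have j': "j < 2^k'" using a k by simp
  have e: "2 * (real j / 2^k) = real j / 2^k'" "2 * (real (j+1) / 2^k) = real (j+1) / 2^k'"
    using k by (simp_all add: field_simps)
  from st show "dyr (2 * s) (2 * t)"
  proof
    assume "s = real j / 2^k \<and> t = real (j+1) / 2^k"
    then show ?thesis using e by (intro dyrI1[OF j']) auto
  next
    assume "t = real j / 2^k \<and> s = real (j+1) / 2^k"
    then show ?thesis using e by (intro dyrI2[OF j']) auto
  qed
qed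


definition P :: "point \<Rightarrow> point \<Rightarrow> real \<Rightarrow> point" where
  "P a b t = a + t *\<^sub>R (b - a)"

lemma P_0[simp]: "P a b 0 = a" and P_1[simp]: "P a b 1 = b"
  by (simp_all add: P_def)

lemma P_inj: "a \<noteq> b \<Longrightarrow> P a b s = P a b t \<longleftrightarrow> s = t"
  by (simp add: P_def)

lemma P_comb: "(1 - u) *\<^sub>R P a b s + u *\<^sub>R P a b t = P a b ((1 - u) * s + u * t)"
  by (simp add: P_def algebra_simps)

lemma P_mid: "midpoint (P a b s) (P a b t) = P a b ((s + t) / 2)"
  by (simp add: P_def midpoint_def vec2_eq field_simps)

lemma P_flip: "P b a (1 - s) = P a b s"
  by (simp add: P_def algebra_simps)

lemma closed_segment_P: "closed_segment (P a b s) (P a b t) = P a b ` closed_segment s t"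
proof -
  have "closed_segment (P a b s) (P a b t) = {(1 - u) *\<^sub>R P a b s + u *\<^sub>R P a b t |u. 0 \<le> u \<and> u \<le> 1}"
    by (simp add: closed_segment_def)
  also have "\<dots> = P a b ` {(1 - u) *\<^sub>R s + u *\<^sub>R t |u. 0 \<le> u \<and> u \<le> 1}"
    by (auto simp: P_comb)
  also have "\<dots> = P a b ` closed_segment s t" by (simp add: closed_segment_def)
  finally show ?thesis .
qed

lemma open_segment_P: "a \<noteq> b \<Longrightarrow> open_segment (P a b s) (P a b t) = P a b ` open_segment s t"
  unfolding open_segment_def closed_segment_P using P_inj by auto

lemma seg_ab_P: "closed_segment a b = P a b ` {0..1}"
  using closed_segment_P[of a b 0 1] by (simp add: closed_segment_eq_real_ivl)

lemma open_seg_ab_P: "a \<noteq> b \<Longrightarrow> open_segment a b = P a b ` {0<..<1}"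
  using open_segment_P[of a b 0 1] by (simp add: open_segment_eq_real_ivl)

lemma mid_ab_P: "midpoint a b = P a b (1/2)"
  using P_mid[of a b 0 1] by simp

lemma P_half: "P a (midpoint a b) s = P a b (s / 2)"
  by (simp add: P_def midpoint_def vec2_eq field_simps)

definition dy :: "point \<Rightarrow> point \<Rightarrow> point \<Rightarrow> point \<Rightarrow> bool" where
  "dy a b u v \<longleftrightarrow> (\<exists>s t. u = P a b s \<and> v = P a b t \<and> dyr s t)"

lemma dy_01: "dy a b a b"
  unfolding dy_def using dyr_01 by (intro exI[of _ 0] exI[of _ 1]) simp

lemma dy_sym: "dy a b u v \<Longrightarrow> dy a b v u"
  unfolding dy_def using dyr_sym by blast

lemma dy_flip: "dy a b u v \<Longrightarrow> dy b a u v"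
  unfolding dy_def
proof (elim exE conjE)
  fix s t assume "u = P a b s" "v = P a b t" "dyr s t"
  then show "\<exists>s t. u = P b a s \<and> v = P b a t \<and> dyr s t"
    using dyr_flip P_flip by (intro exI[of _ "1 - s"] exI[of _ "1 - t"]) auto
qed

lemma dy_half: "dy a b u v \<Longrightarrow> dy a b u (midpoint u v)"
  unfolding dy_def using dyr_half P_mid by metis

lemma dy_seg: "dy a b u v \<Longrightarrow> u \<in> closed_segment a b \<and> v \<in> closed_segment a b"
  unfolding dy_def seg_ab_P using dyr_bounds by auto

lemma dy_neq: "a \<noteq> b \<Longrightarrow> dy a b u v \<Longrightarrow> u \<noteq> v"
  unfolding dy_def using dyr_bounds P_inj by metis

lemma dy_scale:
  assumes ab: "a \<noteq> b" and d: "dy a b u v"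
    and u: "u \<in> closed_segment a (midpoint a b)" and v: "v \<in> closed_segment a (midpoint a b)"
  shows "dy a (midpoint a b) u v"
proof -
  obtain s t where st: "u = P a b s" "v = P a b t" "dyr s t" using d unfolding dy_def by blast
  have cs: "closed_segment a (midpoint a b) = P a b ` {0..1/2}"
    using closed_segment_P[of a b 0 "1/2"] by (simp add: closed_segment_eq_real_ivl mid_ab_P)
  have "s \<le> 1/2" using u st(1) P_inj[OF ab] unfolding cs by auto
  moreover have "t \<le> 1/2" using v st(2) P_inj[OF ab] unfolding cs by auto
  ultimately have "dyr (2 * s) (2 * t)" using dyr_scale st(3) by blast
  moreover have "u = P a (midpoint a b) (2 * s)" "v = P a (midpoint a b) (2 * t)"
    using st by (simp_all add: P_half)
  ultimately show ?thesis unfolding dy_def by blast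
qed

lemma dy_mid:
  assumes ab: "a \<noteq> b" and d: "dy a b u v"
    and m: "midpoint u v \<in> open_segment a (midpoint a b)"
  shows "dy a (midpoint a b) u v"
proof -
  obtain s t where st: "u = P a b s" "v = P a b t" "dyr s t" using d unfolding dy_def by blast
  have os: "open_segment a (midpoint a b) = P a b ` {0<..<1/2}"
    using open_segment_P[OF ab, of 0 "1/2"] by (simp add: open_segment_eq_real_ivl mid_ab_P)
  have "midpoint u v = P a b ((s + t) / 2)" using st P_mid by simp
  then obtain x where "P a b ((s + t) / 2) = P a b x" "x < 1/2" using m unfolding os by auto
  then have "(s + t) / 2 < 1/2" using P_inj[OF ab] by simp
  then have "s \<le> 1/2" "t \<le> 1/2" using dyr_mid_lt st(3) by auto
  moreover have cs: "closed_segment a (midpoint a b) = P a b ` {0..1/2}"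
    using closed_segment_P[of a b 0 "1/2"] by (simp add: closed_segment_eq_real_ivl mid_ab_P)
  ultimately have "u \<in> closed_segment a (midpoint a b)" "v \<in> closed_segment a (midpoint a b)"
    using st dyr_bounds[OF st(3)] unfolding cs by auto
  then show ?thesis using dy_scale[OF ab d] by blast
qed

lemma perp_line:
  fixes n :: point
  assumes n: "n \<noteq> 0" and ab: "a \<noteq> b" and a: "n \<bullet> a = \<beta>" and b: "n \<bullet> b = \<beta>" and x: "n \<bullet> x = \<beta>"
  shows "\<exists>t. x = P a b t"
proof -
  define u where "u = x - a"
  define w where "w = b - a"
  have nu: "n$1 * u$1 + n$2 * u$2 = 0" using a x unfolding u_def by (simp add: inner2 algebra_simps)
  have nw: "n$1 * w$1 + n$2 * w$2 = 0" using a b unfolding w_def by (simp add: inner2 algebra_simps)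
  have "cross u w = 0"
  proof (cases "n$1 = 0")
    case True
    then have "n$2 \<noteq> 0" using n by (simp add: vec2_eq)
    then have "u$2 = 0" "w$2 = 0" using nu nw True by auto
    then show ?thesis by (simp add: cross_def)
  next
    case False
    have "n$1 * (u$1 * w$2 - u$2 * w$1) = (n$1 * u$1 + n$2 * u$2) * w$2 - (n$1 * w$1 + n$2 * w$2) * u$2"
      by (simp add: algebra_simps)
    then have "n$1 * (u$1 * w$2 - u$2 * w$1) = 0" using nu nw by simp
    then show ?thesis using False by (simp add: cross_def)
  qed
  moreover have "w \<noteq> 0" using ab unfolding w_def by simp
  ultimately have "u = ((u \<bullet> w) / (w \<bullet> w)) *\<^sub>R w" by (rule cross0_parallel)
  then have "x = P a b ((u \<bullet> w) / (w \<bullet> w))" unfolding P_def u_def w_def by (simp add: algebra_simps)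
  then show ?thesis by blast
qed


definition edge_ok :: "tri set \<Rightarrow> (point \<Rightarrow> (point \<times> point) option) \<Rightarrow> point \<Rightarrow> point \<Rightarrow> bool" where
  "edge_ok T par a b \<longleftrightarrow>
    (\<forall>u v. u \<in> nodes T \<longrightarrow> v \<in> nodes T \<longrightarrow> u \<in> closed_segment a b \<longrightarrow> v \<in> closed_segment a b \<longrightarrow>
        u \<noteq> v \<longrightarrow> open_segment u v \<inter> nodes T = {} \<longrightarrow> dy a b u v) \<and>
    (\<forall>z \<in> nodes T \<inter> open_segment a b. \<exists>u v. par z = Some (u, v) \<and> u \<in> nodes T \<and> v \<in> nodes T \<and>
        dy a b u v \<and> z = midpoint u v)"

definition INV :: "tri set \<Rightarrow> (point \<Rightarrow> (point \<times> point) option) \<Rightarrow> bool" where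
  "INV T par \<longleftrightarrow> finite T \<and> (\<forall>K\<in>T. \<not> collinear (verts K)) \<and>
     (\<forall>K\<in>T. \<forall>K'\<in>T. K \<noteq> K' \<longrightarrow> interior (tri_hull K) \<inter> interior (tri_hull K') = {}) \<and>
     (\<forall>K\<in>T. \<forall>a\<in>verts K. \<forall>b\<in>verts K. a \<noteq> b \<longrightarrow> edge_ok T par a b)"

lemma verts3: "verts (p, q, r) = {p, q, r}" by (simp add: verts_def)
lemma hull3: "tri_hull (p, q, r) = convex hull {p, q, r}" by (simp add: tri_hull_def verts_def)

lemma seg_collinear: "v \<in> closed_segment x y \<Longrightarrow> collinear {x, y, v}"
proof -
  assume "v \<in> closed_segment x y"
  then obtain u where "v = (1 - u) *\<^sub>R x + u *\<^sub>R y" by (auto simp: in_segment)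
  then have "collinear {x, v, y}" unfolding collinear_3_expand by (auto intro!: exI[of _ "1 - u"])
  then show ?thesis by (simp add: insert_commute)
qed

lemma noncol_no_vertex_on_edge:
  assumes nc: "\<not> collinear {p,q,r::point}" and "a \<in> {p,q,r}" "b \<in> {p,q,r}" "v \<in> {p,q,r}"
    and "a \<noteq> b" "v \<noteq> a" "v \<noteq> b"
  shows "v \<notin> closed_segment a b"
proof
  assume v: "v \<in> closed_segment a b"
  obtain c where c: "{p,q,r} = {a,b,c}" using third_vertex assms by blast
  then have "v = c" using assms by auto
  then show False using seg_collinear[OF v] nc c by simp
qed

lemma finite_nodes: "finite T \<Longrightarrow> finite (nodes T)"
  by (auto simp: nodes_def verts_def split: prod.splits)

lemma init_vertex:
  assumes T0: "initial_triangulation T0" and K: "K \<in> T0" and K': "K' \<in> T0"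
    and v: "v \<in> verts K'" and vh: "v \<in> tri_hull K"
  shows "v \<in> verts K"
proof (cases "K' = K")
  case True then show ?thesis using v by simp
next
  case False
  have nc: "\<not> collinear (verts K')" using T0 K' unfolding initial_triangulation_def by blast
  have "v \<in> tri_hull K \<inter> tri_hull K'" using vh v hull_subset[of "verts K'" convex] unfolding tri_hull_def by auto
  then have vC: "v \<in> convex hull (verts K \<inter> verts K')"
    using T0 K K' False unfolding initial_triangulation_def by metis
  show ?thesis
  proof (rule ccontr)
    assume nv: "v \<notin> verts K"
    obtain p q r where K'e: "K' = (p, q, r)" by (cases K') auto
    have "\<exists>x y. {p,q,r} = {v,x,y}" using v unfolding K'e verts3 by auto
    then obtain x y where xy: "{p,q,r} = {v,x,y}" by blast
    have "verts K \<inter> verts K' \<subseteq> {x, y}" using nv unfolding K'e verts3 xy by auto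
    then have "v \<in> convex hull {x, y}" using vC hull_mono by blast
    then have "v \<in> closed_segment x y" by (simp add: segment_convex_hull)
    then have "collinear {x, y, v}" by (rule seg_collinear)
    then show False using nc unfolding K'e verts3 xy by (simp add: insert_commute)
  qed
qed

lemma init_no_open:
  assumes T0: "initial_triangulation T0" and K: "K \<in> T0"
    and a: "a \<in> verts K" and b: "b \<in> verts K" and ab: "a \<noteq> b" and v: "v \<in> nodes T0"
  shows "v \<notin> open_segment a b"
proof
  assume vo: "v \<in> open_segment a b"
  obtain K' where K': "K' \<in> T0" "v \<in> verts K'" using v unfolding nodes_def by blast
  have "v \<in> tri_hull K" using vo a b seg_in_hull[of a "verts K" b] unfolding tri_hull_def
    by (auto simp: open_segment_def)
  then have vK: "v \<in> verts K" using init_vertex[OF T0 K K'] by blast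
  have nc: "\<not> collinear (verts K)" using T0 K unfolding initial_triangulation_def by blast
  obtain p q r where Ke: "K = (p, q, r)" by (cases K) auto
  show False using noncol_no_vertex_on_edge[of p q r a b v] nc a b vK ab vo
    unfolding Ke verts3 by (auto simp: open_segment_def)
qed

lemma init_disj:
  assumes T0: "initial_triangulation T0" and K: "K \<in> T0" and K': "K' \<in> T0" and ne: "K \<noteq> K'"
  shows "interior (tri_hull K) \<inter> interior (tri_hull K') = {}"
proof -
  have e: "tri_hull K \<inter> tri_hull K' = convex hull (verts K \<inter> verts K')"
    and vne: "verts K \<noteq> verts K'"
    using T0 K K' ne unfolding initial_triangulation_def by metis+
  have c3: "card (verts K) = 3" "card (verts K') = 3"
    using T0 K K' unfolding initial_triangulation_def by blast+
  have fin: "finite (verts K)" "finite (verts K')" by (auto simp: verts_def split: prod.splits)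
  have "card (verts K \<inter> verts K') \<le> 2"
  proof (rule ccontr)
    assume "\<not> card (verts K \<inter> verts K') \<le> 2"
    then have "card (verts K \<inter> verts K') \<ge> 3" by simp
    moreover have "card (verts K \<inter> verts K') \<le> card (verts K)" by (rule card_mono[OF fin(1)]) auto
    ultimately have "verts K \<inter> verts K' = verts K" using c3 fin
      by (metis Int_lower1 card_subset_eq le_antisym)
    moreover have "card (verts K \<inter> verts K') \<le> card (verts K')" by (rule card_mono[OF fin(2)]) auto
    ultimately have "verts K = verts K'" using c3 fin
      by (metis Int_lower2 card_subset_eq)
    then show False using vne by simp
  qed
  then have "interior (convex hull (verts K \<inter> verts K')) = {}"
    by (intro empty_interior_convex_hull) (use fin in auto)
  moreover have "interior (tri_hull K) \<inter> interior (tri_hull K') \<subseteq> interior (tri_hull K \<inter> tri_hull K')"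
    by (simp add: interior_Int)
  ultimately show ?thesis using e by auto
qed

lemma inv_init:
  assumes T0: "initial_triangulation T0"
  shows "INV T0 (\<lambda>_. None)"
  unfolding INV_def
proof (intro conjI ballI impI allI)
  show "finite T0" using T0 unfolding initial_triangulation_def by blast
next
  fix K assume "K \<in> T0" then show "\<not> collinear (verts K)" using T0 unfolding initial_triangulation_def by blast
next
  fix K K' assume "K \<in> T0" "K' \<in> T0" "K \<noteq> K'"
  then show "interior (tri_hull K) \<inter> interior (tri_hull K') = {}" using init_disj[OF T0] by blast
next
  fix K a b assume K: "K \<in> T0" and a: "a \<in> verts K" and b: "b \<in> verts K" and ab: "a \<noteq> b"
  have no: "\<And>v. v \<in> nodes T0 \<Longrightarrow> v \<notin> open_segment a b" using init_no_open[OF T0 K a b ab] by blast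
  have aN: "a \<in> nodes T0" "b \<in> nodes T0" using K a b unfolding nodes_def by auto
  show "edge_ok T0 (\<lambda>_. None) a b"
    unfolding edge_ok_def
  proof (intro conjI allI impI ballI)
    fix u v assume u: "u \<in> nodes T0" and v: "v \<in> nodes T0" and us: "u \<in> closed_segment a b"
      and vs: "v \<in> closed_segment a b" and uv: "u \<noteq> v"
    have "u \<in> {a, b}" "v \<in> {a, b}" using no[OF u] no[OF v] us vs by (auto simp: open_segment_def)
    then have "(u = a \<and> v = b) \<or> (u = b \<and> v = a)" using uv by auto
    then show "dy a b u v" using dy_01 dy_sym by blast
  next
    fix z assume "z \<in> nodes T0 \<inter> open_segment a b"
    then show "\<exists>u v. None = Some (u, v) \<and> u \<in> nodes T0 \<and> v \<in> nodes T0 \<and> dy a b u v \<and> z = midpoint u v"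
      using no by blast
  qed
qed


lemma inv_nc: "INV T par \<Longrightarrow> K \<in> T \<Longrightarrow> \<not> collinear (verts K)"
  unfolding INV_def by blast

lemma inv_edge: "INV T par \<Longrightarrow> K \<in> T \<Longrightarrow> a \<in> verts K \<Longrightarrow> b \<in> verts K \<Longrightarrow> a \<noteq> b \<Longrightarrow> edge_ok T par a b"
  unfolding INV_def by blast

lemma inv_disj: "INV T par \<Longrightarrow> K \<in> T \<Longrightarrow> K' \<in> T \<Longrightarrow> K \<noteq> K' \<Longrightarrow> interior (tri_hull K) \<inter> interior (tri_hull K') = {}"
  unfolding INV_def by blast

lemma tri_nc: "\<not> collinear (verts K) \<Longrightarrow> K = (p, q, r) \<Longrightarrow> \<not> collinear {p, q, r}"
  by (simp add: verts3)

lemma vertex_not_int_tri: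
  assumes "\<not> collinear (verts K)" "v \<in> verts K"
  shows "v \<notin> interior (tri_hull K)"
proof -
  obtain p q r where K: "K = (p, q, r)" by (cases K) auto
  show ?thesis using vertex_not_interior[of p q r v] assms unfolding K verts3 hull3 by simp
qed

lemma closure_int_tri:
  assumes "\<not> collinear (verts K)"
  shows "closure (interior (tri_hull K)) = tri_hull K"
proof -
  obtain p q r where K: "K = (p, q, r)" by (cases K) auto
  show ?thesis using tri_closure_interior[of p q r] assms unfolding K verts3 hull3 by simp
qed

lemma vert_in_hull: "v \<in> verts K \<Longrightarrow> v \<in> tri_hull K"
  unfolding tri_hull_def by (simp add: hull_inc)

lemma vert_not_int:
  assumes I: "INV T par" and K: "K \<in> T" and K': "K' \<in> T" and v: "v \<in> verts K'"
  shows "v \<notin> interior (tri_hull K)"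
proof (cases "K = K'")
  case True then show ?thesis using vertex_not_int_tri inv_nc[OF I K] v by simp
next
  case False
  show ?thesis
  proof
    assume vi: "v \<in> interior (tri_hull K)"
    have "v \<in> closure (interior (tri_hull K'))" using closure_int_tri[OF inv_nc[OF I K']] vert_in_hull[OF v] by simp
    then have "interior (tri_hull K) \<inter> closure (interior (tri_hull K')) \<noteq> {}" using vi by blast
    then have "interior (tri_hull K) \<inter> interior (tri_hull K') \<noteq> {}"
      using open_Int_closure_eq_empty[of "interior (tri_hull K)" "interior (tri_hull K')"] by auto
    then show False using inv_disj[OF I K K' False] by simp
  qed
qed

lemma node_not_int:
  assumes I: "INV T par" and K: "K \<in> T" and v: "v \<in> nodes T"
  shows "v \<notin> interior (tri_hull K)"
  using v vert_not_int[OF I K] unfolding nodes_def by blast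

lemma inv_finite_nodes: "INV T par \<Longrightarrow> finite (nodes T)"
  unfolding INV_def using finite_nodes by blast

lemma edge_ok_flip: "edge_ok T par a b \<Longrightarrow> edge_ok T par b a"
  unfolding edge_ok_def by (simp add: closed_segment_commute open_segment_commute) (meson dy_flip)

lemma edge_ok_nodes_eq: "nodes T' = nodes T \<Longrightarrow> edge_ok T' par a b = edge_ok T par a b"
  unfolding edge_ok_def by simp

lemma edge_ok_empty:
  assumes ab: "a \<in> nodes T" "b \<in> nodes T" and e: "nodes T \<inter> open_segment a b = {}"
  shows "edge_ok T par a b"
  unfolding edge_ok_def
proof (intro conjI allI impI ballI)
  fix u v assume u: "u \<in> nodes T" and v: "v \<in> nodes T" and us: "u \<in> closed_segment a b"
    and vs: "v \<in> closed_segment a b" and uv: "u \<noteq> v"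
  have "u \<in> {a, b}" "v \<in> {a, b}" using e u v us vs by (auto simp: open_segment_def)
  then have "(u = a \<and> v = b) \<or> (u = b \<and> v = a)" using uv by auto
  then show "dy a b u v" using dy_01 dy_sym by blast
next
  fix z assume "z \<in> nodes T \<inter> open_segment a b"
  then show "\<exists>u v. par z = Some (u, v) \<and> u \<in> nodes T \<and> v \<in> nodes T \<and> dy a b u v \<and> z = midpoint u v"
    using e by blast
qed

lemma edge_ok_transfer:
  assumes N: "nodes T' = insert m (nodes T)" and par: "\<forall>z. z \<noteq> m \<longrightarrow> par' z = par z"
    and E: "edge_ok T par a b" and m: "m \<notin> closed_segment a b"
  shows "edge_ok T' par' a b"
  unfolding edge_ok_def
proof (intro conjI allI impI ballI)
  fix u v assume u: "u \<in> nodes T'" and v: "v \<in> nodes T'" and us: "u \<in> closed_segment a b"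
    and vs: "v \<in> closed_segment a b" and uv: "u \<noteq> v" and o: "open_segment u v \<inter> nodes T' = {}"
  have "u \<in> nodes T" "v \<in> nodes T" using u v us vs m N by auto
  moreover have "open_segment u v \<inter> nodes T = {}" using o N by auto
  ultimately show "dy a b u v" using E us vs uv unfolding edge_ok_def by blast
next
  fix z assume z: "z \<in> nodes T' \<inter> open_segment a b"
  then have zm: "z \<noteq> m" using m by (auto simp: open_segment_def)
  then have "z \<in> nodes T \<inter> open_segment a b" using z N by auto
  then obtain u v where "par z = Some (u, v) \<and> u \<in> nodes T \<and> v \<in> nodes T \<and> dy a b u v \<and> z = midpoint u v"
    using E unfolding edge_ok_def by blast
  then show "\<exists>u v. par' z = Some (u, v) \<and> u \<in> nodes T' \<and> v \<in> nodes T' \<and> dy a b u v \<and> z = midpoint u v"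
    using par zm N by auto
qed


lemma descent:
  assumes E: "edge_ok T par p q" and pq: "p \<noteq> q" and fin: "finite (nodes T)"
    and pN: "p \<in> nodes T" and qN: "q \<in> nodes T" and m: "midpoint p q \<notin> nodes T"
  shows "nodes T \<inter> open_segment p q = {}"
proof -
  define S where "S = {t. P p q t \<in> nodes T \<and> 0 \<le> t \<and> t \<le> 1}"
  have injP: "inj (P p q)" using P_inj[OF pq] by (simp add: inj_on_def)
  have finS: "finite S" unfolding S_def
    using finite_vimageI[OF fin injP] by (rule rev_finite_subset) auto
  have S0: "0 \<in> S" and S1: "1 \<in> S" using pN qN unfolding S_def by auto
  have Sh: "1/2 \<notin> S" using m unfolding S_def mid_ab_P by auto
  define L where "L = {t\<in>S. t < 1/2}"
  define H where "H = {t\<in>S. 1/2 < t}"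
  have finL: "finite L" "L \<noteq> {}" using finS S0 unfolding L_def by auto
  have finH: "finite H" "H \<noteq> {}" using finS S1 unfolding H_def by auto
  define lo where "lo = Max L"
  define hi where "hi = Min H"
  have lo: "lo \<in> S" "lo < 1/2" using Max_in[OF finL] unfolding lo_def L_def by auto
  have hi: "hi \<in> S" "1/2 < hi" using Min_in[OF finH] unfolding hi_def H_def by auto
  have loM: "\<And>t. t \<in> S \<Longrightarrow> t < 1/2 \<Longrightarrow> t \<le> lo" using Max_ge[OF finL(1)] unfolding lo_def L_def by auto
  have hiM: "\<And>t. t \<in> S \<Longrightarrow> 1/2 < t \<Longrightarrow> hi \<le> t" using Min_le[OF finH(1)] unfolding hi_def H_def by auto
  have gap: "\<And>t. t \<in> S \<Longrightarrow> t \<le> lo \<or> hi \<le> t"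
  proof -
    fix t assume t: "t \<in> S"
    show "t \<le> lo \<or> hi \<le> t"
    proof (cases "t < 1/2")
      case True then show ?thesis using loM t by auto
    next
      case False
      have "t \<noteq> 1/2" using Sh t by metis
      then have "1/2 < t" using False by simp
      then show ?thesis using hiM t by auto
    qed
  qed
  have lohi: "lo < hi" using lo hi by simp
  have uN: "P p q lo \<in> nodes T" "P p q hi \<in> nodes T" using lo hi unfolding S_def by auto
  have us: "P p q lo \<in> closed_segment p q" "P p q hi \<in> closed_segment p q"
    using lo hi unfolding S_def seg_ab_P by auto
  have une: "P p q lo \<noteq> P p q hi" using P_inj[OF pq] lohi by simp
  have oe: "open_segment (P p q lo) (P p q hi) \<inter> nodes T = {}"
  proof (rule ccontr)
    assume "open_segment (P p q lo) (P p q hi) \<inter> nodes T \<noteq> {}"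
    then obtain x where x: "x \<in> open_segment (P p q lo) (P p q hi)" "x \<in> nodes T" by blast
    then obtain t where t: "x = P p q t" "lo < t" "t < hi"
      using lohi unfolding open_segment_P[OF pq] by (auto simp: open_segment_eq_real_ivl)
    have "0 \<le> lo" "hi \<le> 1" using lo hi unfolding S_def by auto
    then have "t \<in> S" using t x unfolding S_def by auto
    then show False using gap t by force
  qed
  have "dy p q (P p q lo) (P p q hi)" using E uN us une oe unfolding edge_ok_def by blast
  then obtain s t where st: "P p q lo = P p q s" "P p q hi = P p q t" "dyr s t" unfolding dy_def by blast
  then have "dyr lo hi" using P_inj[OF pq] by simp
  then have lh: "lo = 0" "hi = 1" using dyr_strad lo hi by blast+
  show ?thesis
  proof (rule ccontr)
    assume "nodes T \<inter> open_segment p q \<noteq> {}"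
    then obtain x where x: "x \<in> nodes T" "x \<in> open_segment p q" by blast
    then obtain t where t: "x = P p q t" "0 < t" "t < 1" unfolding open_seg_ab_P[OF pq] by auto
    then have "t \<in> S" using x unfolding S_def by auto
    then show False using gap t lh by force
  qed
qed


lemma real_R1:
  fixes tp tq :: real
  assumes "tp \<noteq> tq" "0 < (tp+tq)/2" "(tp+tq)/2 < 1" "0 \<notin> open_segment tp tq" "1 \<notin> open_segment tp tq"
  shows "0 \<le> tp \<and> tp \<le> 1 \<and> 0 \<le> tq \<and> tq \<le> 1"
  using assms by (cases "tp \<le> tq") (auto simp: open_segment_eq_real_ivl)

lemma real_R2:
  fixes tp tq tv :: real
  assumes "tp \<noteq> tq" "tv \<noteq> tp" "tv \<noteq> tq" "tv \<noteq> (tp+tq)/2"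
  shows "tv \<in> open_segment tp tq \<or> tp \<in> open_segment ((tp+tq)/2) tv \<or> tq \<in> open_segment ((tp+tq)/2) tv"
  using assms by (cases "tp \<le> tq"; cases "tv \<le> tp"; cases "tv \<le> tq") (auto simp: open_segment_eq_real_ivl)

lemma sep_tri:
  assumes "\<not> collinear (verts K)" "\<not> collinear (verts K')"
    "interior (tri_hull K) \<inter> interior (tri_hull K') = {}"
  shows "\<exists>n \<beta>. n \<noteq> 0 \<and> (\<forall>x\<in>tri_hull K. n \<bullet> x \<le> \<beta>) \<and> (\<forall>x\<in>tri_hull K'. n \<bullet> x \<ge> \<beta>)"
proof -
  obtain p q r where K: "K = (p, q, r)" by (cases K) auto
  obtain p' q' r' where K': "K' = (p', q', r')" by (cases K') auto
  show ?thesis using tri_sep[of p q r p' q' r'] assms unfolding K K' verts3 hull3 by simp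
qed

lemma seg_extreme:
  fixes n :: point
  assumes x: "n \<bullet> x \<le> \<beta>" and y: "n \<bullet> y \<le> \<beta>" and z: "z \<in> open_segment x y" and zb: "n \<bullet> z \<ge> \<beta>"
  shows "n \<bullet> x = \<beta> \<and> n \<bullet> y = \<beta>"
proof -
  obtain u where u: "0 < u" "u < 1" "z = (1 - u) *\<^sub>R x + u *\<^sub>R y" using z by (auto simp: in_segment)
  have nz: "n \<bullet> z = (1 - u) * (n \<bullet> x) + u * (n \<bullet> y)" using u(3) by (simp add: inner_add_right)
  have a: "(1 - u) * (\<beta> - n \<bullet> x) \<ge> 0" using u x by simp
  have b: "u * (\<beta> - n \<bullet> y) \<ge> 0" using u y by simp
  have "(1 - u) * (\<beta> - n \<bullet> x) + u * (\<beta> - n \<bullet> y) = \<beta> - n \<bullet> z" using nz by (simp add: algebra_simps)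
  then have "(1 - u) * (\<beta> - n \<bullet> x) = 0" "u * (\<beta> - n \<bullet> y) = 0" using a b zb by linarith+
  then show ?thesis using u by simp
qed

lemma open_seg_hull: "a \<in> verts K \<Longrightarrow> b \<in> verts K \<Longrightarrow> open_segment a b \<subseteq> tri_hull K"
  unfolding tri_hull_def using seg_in_hull[of a "verts K" b] by (auto simp: open_segment_def)

lemma closed_seg_hull: "a \<in> verts K \<Longrightarrow> b \<in> verts K \<Longrightarrow> closed_segment a b \<subseteq> tri_hull K"
  unfolding tri_hull_def using seg_in_hull[of a "verts K" b] by auto

lemma old_edge_newm:
  assumes I: "INV T par" and K: "K \<in> T" and K0: "K0 \<in> T" and KK0: "K \<noteq> K0"
    and a: "a \<in> verts K" and b: "b \<in> verts K" and ab: "a \<noteq> b"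
    and p: "p \<in> verts K0" and q: "q \<in> verts K0" and pq: "p \<noteq> q"
    and mN: "midpoint p q \<notin> nodes T" and mab: "midpoint p q \<in> open_segment a b"
    and N: "nodes T' = insert (midpoint p q) (nodes T)"
    and par': "par' = par(midpoint p q := Some (p, q))"
  shows "edge_ok T' par' a b"
proof -
  define m where "m = midpoint p q"
  have E: "edge_ok T par a b" using inv_edge[OF I K a b ab] .
  have EK0: "edge_ok T par p q" using inv_edge[OF I K0 p q pq] .
  have pN: "p \<in> nodes T" and qN: "q \<in> nodes T" and aN: "a \<in> nodes T" and bN: "b \<in> nodes T"
    using p q a b K K0 unfolding nodes_def by auto
  have noopen: "nodes T \<inter> open_segment p q = {}"
    using descent[OF EK0 pq inv_finite_nodes[OF I] pN qN mN] .
  obtain n \<beta> where nb: "n \<noteq> 0" "\<forall>x\<in>tri_hull K. n \<bullet> x \<le> \<beta>" "\<forall>x\<in>tri_hull K0. n \<bullet> x \<ge> \<beta>"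
    using sep_tri[OF inv_nc[OF I K] inv_nc[OF I K0] inv_disj[OF I K K0 KK0]] by blast
  have mpq: "m \<in> open_segment p q" unfolding m_def using pq by (simp add: midpoint_in_open_segment)
  have mK: "m \<in> tri_hull K" using open_seg_hull[OF a b] mab unfolding m_def by auto
  have mK0: "m \<in> tri_hull K0" using open_seg_hull[OF p q] mpq by auto
  have nm: "n \<bullet> m = \<beta>" using nb mK mK0 by (meson order_antisym)
  have nab: "n \<bullet> a = \<beta> \<and> n \<bullet> b = \<beta>"
    using seg_extreme[of n a \<beta> b m] nb(2) vert_in_hull[OF a] vert_in_hull[OF b] mab nm unfolding m_def by auto
  have "(-n) \<bullet> p \<le> -\<beta>" "(-n) \<bullet> q \<le> -\<beta>" using nb(3) vert_in_hull[OF p] vert_in_hull[OF q] by auto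
  then have npq: "n \<bullet> p = \<beta> \<and> n \<bullet> q = \<beta>"
    using seg_extreme[of "-n" p "-\<beta>" q m] mpq nm by auto
  obtain tp where tp: "p = P a b tp" using perp_line[OF nb(1) ab] nab npq by blast
  obtain tq where tq: "q = P a b tq" using perp_line[OF nb(1) ab] nab npq by blast
  have tpq: "tp \<noteq> tq" using pq tp tq by auto
  have mP: "m = P a b ((tp + tq)/2)" unfolding m_def tp tq by (rule P_mid)
  have "(tp + tq)/2 \<in> {0<..<1}" using mab P_inj[OF ab] unfolding open_seg_ab_P[OF ab] m_def[symmetric] mP by auto
  moreover have "0 \<notin> open_segment tp tq" "1 \<notin> open_segment tp tq"
    using noopen aN bN unfolding tp tq open_segment_P[OF ab] by (metis IntI P_0 P_1 empty_iff image_eqI)+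
  ultimately have tb: "0 \<le> tp \<and> tp \<le> 1 \<and> 0 \<le> tq \<and> tq \<le> 1" using real_R1[OF tpq] by auto
  have pS: "p \<in> closed_segment a b" "q \<in> closed_segment a b" unfolding seg_ab_P tp tq using tb by auto
  have dpq: "dy a b p q" using E pN qN pS pq noopen unfolding edge_ok_def by blast
  have dmp: "dy a b m p" using dy_sym[OF dy_half[OF dpq]] unfolding m_def .
  have dmq: "dy a b m q" using dy_sym[OF dy_half[OF dy_sym[OF dpq]]] unfolding m_def by (simp add: midpoint_sym)
  have nbr: "v = p \<or> v = q" if v: "v \<in> nodes T" "v \<in> closed_segment a b" "v \<noteq> m"
      and o: "open_segment m v \<inter> nodes T' = {}" for v
  proof (rule ccontr)
    assume nv: "\<not> (v = p \<or> v = q)"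
    obtain tv where tv: "v = P a b tv" using v(2) unfolding seg_ab_P by auto
    have "tv \<noteq> tp" "tv \<noteq> tq" "tv \<noteq> (tp+tq)/2" using nv v(3) unfolding tv tp tq mP by metis+
    then have "tv \<in> open_segment tp tq \<or> tp \<in> open_segment ((tp+tq)/2) tv \<or> tq \<in> open_segment ((tp+tq)/2) tv"
      using real_R2[OF tpq] by blast
    then show False
    proof (elim disjE)
      assume "tv \<in> open_segment tp tq"
      then have "v \<in> open_segment p q" unfolding tv tp tq open_segment_P[OF ab] by blast
      then show False using noopen v(1) by blast
    next
      assume "tp \<in> open_segment ((tp+tq)/2) tv"
      then have "p \<in> open_segment m v" unfolding tv tp mP open_segment_P[OF ab] by blast
      then show False using o N pN by blast
    next
      assume "tq \<in> open_segment ((tp+tq)/2) tv"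
      then have "q \<in> open_segment m v" unfolding tv tq mP open_segment_P[OF ab] by blast
      then show False using o N qN by blast
    qed
  qed
  show ?thesis
    unfolding edge_ok_def
  proof (intro conjI allI impI ballI)
    fix u v assume u: "u \<in> nodes T'" and v: "v \<in> nodes T'" and us: "u \<in> closed_segment a b"
      and vs: "v \<in> closed_segment a b" and uv: "u \<noteq> v" and o: "open_segment u v \<inter> nodes T' = {}"
    show "dy a b u v"
    proof (cases "u = m")
      case True
      then have "v \<in> nodes T" "v \<noteq> m" using v N uv unfolding m_def by auto
      then have "v = p \<or> v = q" using nbr vs o True by blast
      then show ?thesis using dmp dmq True by blast
    next
      case uF: False
      show ?thesis
      proof (cases "v = m")
        case True
        then have "u \<in> nodes T" using u N uF unfolding m_def by auto
        moreover have "open_segment m u \<inter> nodes T' = {}" using o True by (simp add: open_segment_commute)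
        ultimately have "u = p \<or> u = q" using nbr us uF by blast
        then show ?thesis using dmp dmq True dy_sym by blast
      next
        case False
        then have "u \<in> nodes T" "v \<in> nodes T" using u v uF N unfolding m_def by auto
        moreover have "open_segment u v \<inter> nodes T = {}" using o N by auto
        ultimately show ?thesis using E us vs uv unfolding edge_ok_def by blast
      qed
    qed
  next
    fix z assume z: "z \<in> nodes T' \<inter> open_segment a b"
    show "\<exists>u v. par' z = Some (u, v) \<and> u \<in> nodes T' \<and> v \<in> nodes T' \<and> dy a b u v \<and> z = midpoint u v"
    proof (cases "z = m")
      case True
      then show ?thesis using par' N pN qN dpq unfolding m_def by auto
    next
      case False
      then have "z \<in> nodes T \<inter> open_segment a b" using z N unfolding m_def by auto
      then obtain u v where "par z = Some (u, v) \<and> u \<in> nodes T \<and> v \<in> nodes T \<and> dy a b u v \<and> z = midpoint u v"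
        using E unfolding edge_ok_def by blast
      then show ?thesis using par' False N unfolding m_def by auto
    qed
  qed
qed


lemma cross_mid1: "cross (p - r) (midpoint p q - r) = (1/2) * cross (q - p) (r - p)"
  by (simp add: cross_def midpoint_def field_simps)

lemma cross_mid2: "cross (r - q) (midpoint p q - q) = (1/2) * cross (q - p) (r - p)"
  by (simp add: cross_def midpoint_def field_simps)

lemma child_nc:
  assumes nc: "\<not> collinear {p,q,r::point}"
  shows "\<not> collinear {r, p, midpoint p q}" "\<not> collinear {q, r, midpoint p q}"
  using nc unfolding collinear_iff_cross cross_mid1 cross_mid2 by simp_all

lemma child_hull_sub:
  shows "convex hull {r, p, midpoint p q} \<subseteq> convex hull {p,q,r::point}"
        "convex hull {q, r, midpoint p q} \<subseteq> convex hull {p,q,r::point}"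
proof -
  have m: "midpoint p q \<in> convex hull {p,q,r}"
    using seg_in_hull[of p "{p,q,r}" q] midpoint_in_closed_segment[of p q] by auto
  show "convex hull {r, p, midpoint p q} \<subseteq> convex hull {p,q,r}"
    using m by (intro hull_minimal) (auto simp: hull_inc)
  show "convex hull {q, r, midpoint p q} \<subseteq> convex hull {p,q,r}"
    using m by (intro hull_minimal) (auto simp: hull_inc)
qed

lemma children_disj:
  assumes nc: "\<not> collinear {p,q,r::point}"
  shows "interior (convex hull {r, p, midpoint p q}) \<inter> interior (convex hull {q, r, midpoint p q}) = {}"
proof (rule ccontr)
  define m where "m = midpoint p q"
  assume "interior (convex hull {r, p, midpoint p q}) \<inter> interior (convex hull {q, r, midpoint p q}) \<noteq> {}"
  then obtain x where x1: "x \<in> interior (convex hull {r, p, m})" and x2: "x \<in> interior (convex hull {q, r, m})"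
    unfolding m_def by blast
  obtain a b c where abc: "0 < a" "0 < b" "0 < c" "a + b + c = 1" "x = a *\<^sub>R r + b *\<^sub>R p + c *\<^sub>R m"
    using x1 tri_interior[OF child_nc(1)[OF nc]] unfolding m_def by auto
  obtain a' b' c' where abc': "0 < a'" "0 < b'" "0 < c'" "a' + b' + c' = 1" "x = a' *\<^sub>R q + b' *\<^sub>R r + c' *\<^sub>R m"
    using x2 tri_interior[OF child_nc(2)[OF nc]] unfolding m_def by auto
  have e1: "x - r = b *\<^sub>R (p - r) + c *\<^sub>R (m - r)" using bary_shift abc(4,5) by blast
  have "x = b' *\<^sub>R r + a' *\<^sub>R q + c' *\<^sub>R m" using abc'(5) by (simp add: algebra_simps)
  then have e2: "x - r = a' *\<^sub>R (q - r) + c' *\<^sub>R (m - r)" using bary_shift[of b' a' c'] abc'(4) by (simp add: algebra_simps)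
  define C where "C = cross (m - r) (p - r)"
  have f1: "cross (m - r) (x - r) = b * C" unfolding e1 C_def by (simp add: cross_simps)
  have qr: "cross (m - r) (q - r) = - C" unfolding C_def m_def by (simp add: cross_def midpoint_def field_simps)
  have f2: "cross (m - r) (x - r) = - a' * C" unfolding e2 using qr by (simp add: cross_simps)
  have "C \<noteq> 0" using child_nc(1)[OF nc] unfolding collinear_iff_cross C_def m_def
    by (metis cross_anti neg_equal_0_iff_equal)
  moreover have "(b + a') * C = 0" using f1 f2 by (simp add: algebra_simps)
  moreover have "b + a' \<noteq> 0" using abc(2) abc'(1) by simp
  ultimately show False by simp
qed


lemma open_half_sub: "(p::point) \<noteq> q \<Longrightarrow> open_segment p (midpoint p q) \<subseteq> open_segment p q"
proof -
  assume pq: "p \<noteq> q"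
  have "open_segment p (midpoint p q) = P p q ` {0<..<1/2}"
    using open_segment_P[OF pq, of 0 "1/2"] by (simp add: open_segment_eq_real_ivl mid_ab_P)
  then show ?thesis unfolding open_seg_ab_P[OF pq] by auto
qed

lemma closed_half_sub: "closed_segment (p::point) (midpoint p q) \<subseteq> closed_segment p q"
  by (simp add: closed_segment_subset midpoint_in_closed_segment)

lemma child_edge:
  assumes I: "INV T par" and K0: "K0 \<in> T" and p: "p \<in> verts K0" and q: "q \<in> verts K0" and pq: "p \<noteq> q"
    and N: "nodes T' = insert (midpoint p q) (nodes T)"
    and par': "midpoint p q \<in> nodes T \<Longrightarrow> par' = par"
  shows "edge_ok T' par' p (midpoint p q)"
proof -
  define m where "m = midpoint p q"
  have EK0: "edge_ok T par p q" using inv_edge[OF I K0 p q pq] .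
  have pN: "p \<in> nodes T" and qN: "q \<in> nodes T" using p q K0 unfolding nodes_def by auto
  have mo: "m \<notin> open_segment p m" by (simp add: open_segment_def)
  show ?thesis
  proof (cases "m \<in> nodes T")
    case False
    have noopen: "nodes T \<inter> open_segment p q = {}"
      using descent[OF EK0 pq inv_finite_nodes[OF I] pN qN] False unfolding m_def by blast
    have "nodes T' \<inter> open_segment p m = {}" using noopen open_half_sub[OF pq] N mo unfolding m_def by auto
    then show ?thesis using edge_ok_empty[of p T' m par'] N pN unfolding m_def by auto
  next
    case True
    then have NT: "nodes T' = nodes T" and pp: "par' = par" using N par' unfolding m_def by auto
    have "edge_ok T par p m"
      unfolding edge_ok_def
    proof (intro conjI allI impI ballI)
      fix u v assume u: "u \<in> nodes T" and v: "v \<in> nodes T" and us: "u \<in> closed_segment p m"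
        and vs: "v \<in> closed_segment p m" and uv: "u \<noteq> v" and o: "open_segment u v \<inter> nodes T = {}"
      have "u \<in> closed_segment p q" "v \<in> closed_segment p q" using us vs closed_half_sub unfolding m_def by blast+
      then have "dy p q u v" using EK0 u v uv o unfolding edge_ok_def by blast
      then show "dy p m u v" using dy_scale[OF pq] us vs unfolding m_def by blast
    next
      fix z assume z: "z \<in> nodes T \<inter> open_segment p m"
      then have "z \<in> nodes T \<inter> open_segment p q" using open_half_sub[OF pq] unfolding m_def by blast
      then obtain u v where uv: "par z = Some (u, v)" "u \<in> nodes T" "v \<in> nodes T" "dy p q u v" "z = midpoint u v"
        using EK0 unfolding edge_ok_def by blast
      then have "dy p m u v" using dy_mid[OF pq] z unfolding m_def by blast
      then show "\<exists>u v. par z = Some (u, v) \<and> u \<in> nodes T \<and> v \<in> nodes T \<and> dy p m u v \<and> z = midpoint u v"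
        using uv by blast
    qed
    then show ?thesis using NT pp edge_ok_nodes_eq unfolding m_def by blast
  qed
qed

lemma median_edge:
  assumes I: "INV T par" and K0: "(p, q, r) \<in> T"
    and N: "nodes T' = insert (midpoint p q) (nodes T)"
  shows "edge_ok T' par' r (midpoint p q)"
proof -
  define m where "m = midpoint p q"
  have nc: "\<not> collinear {p,q,r}" using inv_nc[OF I K0] by (simp add: verts3)
  have "nodes T \<inter> open_segment r m = {}"
    using node_not_int[OF I K0] median_interior[OF nc] unfolding hull3 m_def by blast
  moreover have "m \<notin> open_segment r m" by (simp add: open_segment_def)
  ultimately have "nodes T' \<inter> open_segment r m = {}" using N unfolding m_def by auto
  moreover have "r \<in> nodes T" unfolding nodes_def by (rule UN_I[OF K0]) (simp add: verts3)
  ultimately show ?thesis using edge_ok_empty[of r T' m par'] N unfolding m_def by auto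
qed


lemma inv_step:
  assumes I: "INV T par" and K0: "K0 \<in> T"
  shows "INV ((T - {K0}) \<union> bisect K0)
           (if ref_mid K0 \<in> nodes T then par else par(ref_mid K0 := Some (ref_edge K0)))"
proof -
  obtain p q r where K0e: "K0 = (p, q, r)" by (cases K0) auto
  define m where "m = midpoint p q"
  define K1 where "K1 = (r, p, m)"
  define K2 where "K2 = (q, r, m)"
  define T' where "T' = (T - {K0}) \<union> {K1, K2}"
  define par' where "par' = (if m \<in> nodes T then par else par(m := Some (p, q)))"
  have bis: "bisect K0 = {K1, K2}" unfolding K0e bisect_def K1_def K2_def m_def by simp
  have rm: "ref_mid K0 = m" unfolding K0e ref_mid_def m_def by simp
  have re: "ref_edge K0 = (p, q)" unfolding K0e ref_edge_def by simp
  have K0T: "(p, q, r) \<in> T" using K0 K0e by simp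
  have nc: "\<not> collinear {p,q,r}" using inv_nc[OF I K0] K0e by (simp add: verts3)
  have d: "p \<noteq> q" "q \<noteq> r" "p \<noteq> r" using noncol_distinct[OF nc] by auto
  have nc1: "\<not> collinear {r, p, m}" and nc2: "\<not> collinear {q, r, m}"
    using child_nc[OF nc] unfolding m_def by auto
  have vK0: "verts K0 = {p, q, r}" unfolding K0e verts3 ..
  have pN: "p \<in> nodes T" "q \<in> nodes T" "r \<in> nodes T" using K0 vK0 unfolding nodes_def by auto
  have N: "nodes T' = insert m (nodes T)"
  proof
    show "nodes T' \<subseteq> insert m (nodes T)"
      using pN unfolding T'_def nodes_def K1_def K2_def by (auto simp: verts3)
    show "insert m (nodes T) \<subseteq> nodes T'"
    proof
      fix v assume "v \<in> insert m (nodes T)"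
      then consider "v = m" | K where "K \<in> T" "v \<in> verts K" unfolding nodes_def by blast
      then show "v \<in> nodes T'"
      proof cases
        case 1 then show ?thesis unfolding T'_def nodes_def K1_def by (force simp: verts3)
      next
        case (2 K)
        show ?thesis
        proof (cases "K = K0")
          case True
          then have "v \<in> {p,q,r}" using 2 vK0 by simp
          then show ?thesis unfolding T'_def nodes_def K1_def K2_def by (force simp: verts3)
        next
          case False then show ?thesis using 2 unfolding T'_def nodes_def by blast
        qed
      qed
    qed
  qed
  have parO: "\<forall>z. z \<noteq> m \<longrightarrow> par' z = par z" unfolding par'_def by auto
  have parM: "m \<in> nodes T \<Longrightarrow> par' = par" unfolding par'_def by auto
  have parN: "m \<notin> nodes T \<Longrightarrow> par' = par(m := Some (p, q))" unfolding par'_def by auto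
  have finT: "finite T" using I unfolding INV_def by blast
  have hK1: "tri_hull K1 = convex hull {r, p, m}" unfolding K1_def hull3 ..
  have hK2: "tri_hull K2 = convex hull {q, r, m}" unfolding K2_def hull3 ..
  have hK0: "tri_hull K0 = convex hull {p, q, r}" unfolding K0e hull3 ..
  have intsub: "interior (tri_hull K) \<subseteq> interior (tri_hull K0)" if "K \<in> {K1, K2}" for K
  proof -
    have "tri_hull K1 \<subseteq> tri_hull K0" "tri_hull K2 \<subseteq> tri_hull K0"
      using child_hull_sub unfolding hK1 hK2 hK0 m_def by auto
    then have "tri_hull K \<subseteq> tri_hull K0" using that by auto
    then show ?thesis by (rule interior_mono)
  qed
  have K12: "K1 \<noteq> K2" using d unfolding K1_def K2_def by simp
  have disj12: "interior (tri_hull K1) \<inter> interior (tri_hull K2) = {}"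
    using children_disj[OF nc] unfolding hK1 hK2 m_def .
  have mrp: "m \<notin> closed_segment r p" using seg_collinear nc1 by blast
  have mqr: "m \<notin> closed_segment q r" using seg_collinear nc2 by blast
  have eold: "edge_ok T' par' x y" if "x \<in> verts K0" "y \<in> verts K0" "x \<noteq> y" "m \<notin> closed_segment x y" for x y
    using edge_ok_transfer[OF N parO inv_edge[OF I K0 that(1-3)] that(4)] .
  have e_rp: "edge_ok T' par' r p" "edge_ok T' par' p r"
    using eold[of r p] eold[of p r] mrp vK0 d by (auto simp: closed_segment_commute)
  have e_qr: "edge_ok T' par' q r" "edge_ok T' par' r q"
    using eold[of q r] eold[of r q] mqr vK0 d by (auto simp: closed_segment_commute)
  have e_rm: "edge_ok T' par' r m" "edge_ok T' par' m r"
    using median_edge[OF I K0T N[unfolded m_def]] edge_ok_flip unfolding m_def by blast+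
  have e_pm: "edge_ok T' par' p m" "edge_ok T' par' m p"
    using child_edge[OF I K0 _ _ d(1) N[unfolded m_def]] parM vK0 edge_ok_flip unfolding m_def by auto
  have e_qm: "edge_ok T' par' q m" "edge_ok T' par' m q"
    using child_edge[OF I K0 _ _ d(1)[symmetric], of T' par'] N parM vK0 edge_ok_flip
    unfolding m_def by (auto simp: midpoint_sym)
  have "INV T' par'"
    unfolding INV_def
  proof (intro conjI ballI impI)
    show "finite T'" using finT unfolding T'_def by simp
  next
    fix K assume "K \<in> T'"
    then consider "K = K1" | "K = K2" | "K \<in> T" unfolding T'_def by blast
    then show "\<not> collinear (verts K)"
      using nc1 nc2 inv_nc[OF I] unfolding K1_def K2_def by (cases; simp add: verts3)
  next
    fix K K' assume K: "K \<in> T'" and K': "K' \<in> T'" and ne: "K \<noteq> K'"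
    show "interior (tri_hull K) \<inter> interior (tri_hull K') = {}"
    proof (cases "K \<in> {K1, K2}")
      case True
      show ?thesis
      proof (cases "K' \<in> {K1, K2}")
        case True
        then show ?thesis using \<open>K \<in> {K1, K2}\<close> ne disj12 by (auto simp: Int_commute)
      next
        case False
        then have "K' \<in> T" "K' \<noteq> K0" using K' unfolding T'_def by auto
        then show ?thesis using inv_disj[OF I K0 \<open>K' \<in> T\<close>] intsub[OF True] by auto
      qed
    next
      case False
      then have KT: "K \<in> T" "K \<noteq> K0" using K unfolding T'_def by auto
      show ?thesis
      proof (cases "K' \<in> {K1, K2}")
        case True
        then show ?thesis using inv_disj[OF I K0 KT(1)] KT(2) intsub[OF True] by auto
      next
        case False
        then have "K' \<in> T" using K' unfolding T'_def by auto
        then show ?thesis using inv_disj[OF I KT(1) _ ne] by blast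
      qed
    qed
  next
    fix K a b assume K: "K \<in> T'" and a: "a \<in> verts K" and b: "b \<in> verts K" and ab: "a \<noteq> b"
    show "edge_ok T' par' a b"
    proof (cases "K = K1")
      case True
      then have "a \<in> {r,p,m}" "b \<in> {r,p,m}" using a b True unfolding K1_def by (auto simp: verts3)
      then show ?thesis using ab e_rp e_rm e_pm by auto
    next
      case n1: False
      show ?thesis
      proof (cases "K = K2")
        case True
        then have "a \<in> {q,r,m}" "b \<in> {q,r,m}" using a b True unfolding K2_def by (auto simp: verts3)
        then show ?thesis using ab e_qr e_rm e_qm by auto
      next
        case False
        then have KT: "K \<in> T" "K \<noteq> K0" using K n1 unfolding T'_def by auto
        have E: "edge_ok T par a b" using inv_edge[OF I KT(1) a b ab] .
        show ?thesis
        proof (cases "m \<in> nodes T")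
          case True
          then show ?thesis using E parM N edge_ok_nodes_eq[of T' T] by auto
        next
          case mF: False
          show ?thesis
          proof (cases "m \<in> closed_segment a b")
            case False
            then show ?thesis using edge_ok_transfer[OF N parO E] by blast
          next
            case True
            have "a \<in> nodes T" "b \<in> nodes T" using a b KT unfolding nodes_def by auto
            then have "m \<in> open_segment a b" using True mF by (auto simp: open_segment_def)
            then show ?thesis
              using old_edge_newm[OF I KT(1) K0 KT(2) a b ab _ _ d(1), of T' par'] vK0 mF N parN
              unfolding m_def by auto
          qed
        qed
      qed
    qed
  qed
  then show ?thesis unfolding T'_def par'_def bis rm re .
qed

lemma inv_reach:
  assumes "nvb_reach T0 T par" and "initial_triangulation T0"
  shows "INV T par"
  using assms
proof (induction rule: nvb_reach.induct)
  case init then show ?case by (rule inv_init)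
next
  case (step T par K) then show ?case using inv_step by blast
qed


lemma elem_in_hull: "z \<in> elem_nodes T E \<Longrightarrow> z \<in> tri_hull E"
proof -
  assume z: "z \<in> elem_nodes T E"
  have "closed (tri_hull E)" unfolding tri_hull_def
    by (simp add: compact_imp_closed finite_imp_compact_convex_hull verts_def split: prod.splits)
  then show ?thesis using z unfolding elem_nodes_def frontier_def by (simp add: closure_closed)
qed

lemma hang_parents:
  assumes I: "INV T par" and E: "E \<in> T" and z: "z \<in> hang_nodes T E"
  shows "\<exists>u v. par z = Some (u, v) \<and> u \<in> elem_nodes T E \<and> v \<in> elem_nodes T E \<and> z = midpoint u v"
proof -
  obtain p q r where Ee: "E = (p, q, r)" by (cases E) auto
  have nc: "\<not> collinear {p,q,r}" using inv_nc[OF I E] Ee by (simp add: verts3)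
  have zN: "z \<in> nodes T" and zf: "z \<in> frontier (convex hull {p,q,r})" and zv: "z \<notin> {p,q,r}"
    using z unfolding hang_nodes_def elem_nodes_def Ee hull3 verts3 by auto
  obtain a b where ab: "a \<in> {p,q,r}" "b \<in> {p,q,r}" "a \<noteq> b" "z \<in> open_segment a b"
    using frontier_tri_open_edge[OF nc zf zv] noncol_distinct[OF nc] by blast
  have "edge_ok T par a b" using inv_edge[OF I E] ab unfolding Ee verts3 by blast
  then obtain u v where uv: "par z = Some (u, v)" "u \<in> nodes T" "v \<in> nodes T" "dy a b u v" "z = midpoint u v"
    using zN ab(4) unfolding edge_ok_def by blast
  have "u \<in> closed_segment a b" "v \<in> closed_segment a b" using dy_seg[OF uv(4)] by auto
  then have "u \<in> frontier (tri_hull E)" "v \<in> frontier (tri_hull E)"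
    using edge_frontier[OF nc ab(1-3)] unfolding Ee hull3 by auto
  then show ?thesis using uv unfolding elem_nodes_def by blast
qed

definition aff :: "point \<Rightarrow> real \<Rightarrow> point \<Rightarrow> real" where
  "aff a b = (\<lambda>x. inner a x + b)"

lemma affine_fun_aff: "affine_fun f \<longleftrightarrow> (\<exists>a b. f = aff a b)"
  unfolding affine_fun_def aff_def by (auto simp: fun_eq_iff)

lemma aff_exists:
  assumes nc: "\<not> collinear {p,q,r::point}"
  shows "\<exists>f. affine_fun f \<and> f p = fp \<and> f q = fq \<and> f r = fr"
proof -
  define u where "u = q - p"
  define w where "w = r - p"
  define D where "D = u$1 * w$2 - u$2 * w$1"
  have "cross (q - p) (r - p) \<noteq> 0" using nc collinear_iff_cross by blast
  then have D: "D \<noteq> 0" unfolding D_def u_def w_def cross_def .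
  define \<alpha> where "\<alpha> = fq - fp"
  define \<beta> where "\<beta> = fr - fp"
  define a1 where "a1 = (\<alpha> * w$2 - \<beta> * u$2) * inverse D"
  define a2 where "a2 = (\<beta> * u$1 - \<alpha> * w$1) * inverse D"
  define a :: point where "a = vector [a1, a2]"
  have a12: "a$1 = a1" "a$2 = a2" unfolding a_def by simp_all
  have "a1 * u$1 + a2 * u$2 = ((\<alpha> * w$2 - \<beta> * u$2) * u$1 + (\<beta> * u$1 - \<alpha> * w$1) * u$2) * inverse D"
    unfolding a1_def a2_def by (simp only: algebra_simps)
  also have "(\<alpha> * w$2 - \<beta> * u$2) * u$1 + (\<beta> * u$1 - \<alpha> * w$1) * u$2 = \<alpha> * D"
    unfolding D_def by (simp only: algebra_simps)
  finally have au: "a \<bullet> u = \<alpha>" using D unfolding inner2 a12 by simp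
  have "a1 * w$1 + a2 * w$2 = ((\<alpha> * w$2 - \<beta> * u$2) * w$1 + (\<beta> * u$1 - \<alpha> * w$1) * w$2) * inverse D"
    unfolding a1_def a2_def by (simp only: algebra_simps)
  also have "(\<alpha> * w$2 - \<beta> * u$2) * w$1 + (\<beta> * u$1 - \<alpha> * w$1) * w$2 = \<beta> * D"
    unfolding D_def by (simp only: algebra_simps)
  finally have aw: "a \<bullet> w = \<beta>" using D unfolding inner2 a12 by simp
  define f where "f = aff a (fp - a \<bullet> p)"
  have "f p = fp" unfolding f_def aff_def by simp
  moreover have "a \<bullet> q = a \<bullet> p + \<alpha>" using au unfolding u_def by (simp add: inner_diff_right)
  then have "f q = fq" unfolding f_def aff_def \<alpha>_def by simp
  moreover have "a \<bullet> r = a \<bullet> p + \<beta>" using aw unfolding w_def by (simp add: inner_diff_right)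
  then have "f r = fr" unfolding f_def aff_def \<beta>_def by simp
  moreover have "affine_fun f" unfolding affine_fun_aff f_def by blast
  ultimately show ?thesis by blast
qed

lemma aff_unique:
  assumes nc: "\<not> collinear {p,q,r::point}" and f: "affine_fun f" and g: "affine_fun g"
    and e: "f p = g p" "f q = g q" "f r = g r"
  shows "f = g"
proof -
  obtain a b where fa: "f = aff a b" using f affine_fun_aff by blast
  obtain a' b' where ga: "g = aff a' b'" using g affine_fun_aff by blast
  define c where "c = a - a'"
  define u where "u = q - p"
  define w where "w = r - p"
  have cu: "c \<bullet> u = 0" using e unfolding fa ga aff_def c_def u_def by (simp add: inner_diff_left inner_diff_right algebra_simps)
  have cw: "c \<bullet> w = 0" using e unfolding fa ga aff_def c_def w_def by (simp add: inner_diff_left inner_diff_right algebra_simps)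
  define D where "D = u$1 * w$2 - u$2 * w$1"
  have D: "D \<noteq> 0" using nc unfolding collinear_iff_cross D_def u_def w_def cross_def by simp
  have cu': "c$1 * u$1 + c$2 * u$2 = 0" and cw': "c$1 * w$1 + c$2 * w$2 = 0" using cu cw by (simp_all add: inner2)
  have "c$1 * D = w$2 * (c$1 * u$1 + c$2 * u$2) - u$2 * (c$1 * w$1 + c$2 * w$2)" unfolding D_def by (simp add: algebra_simps)
  then have "c$1 * D = 0" using cu' cw' by simp
  then have c1: "c$1 = 0" using D by simp
  have "c$2 * D = u$1 * (c$1 * w$1 + c$2 * w$2) - w$1 * (c$1 * u$1 + c$2 * u$2)" unfolding D_def by (simp add: algebra_simps)
  then have "c$2 * D = 0" using cu' cw' by simp
  then have c2: "c$2 = 0" using D by simp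
  have "a = a'" using c1 c2 unfolding c_def by (simp add: vec2_eq)
  moreover then have "b = b'" using e(1) unfolding fa ga aff_def by simp
  ultimately show ?thesis unfolding fa ga by simp
qed

lemma interp_THE:
  fixes v :: "point \<Rightarrow> real"
  assumes nc: "\<not> collinear (verts E)"
  defines "F \<equiv> THE f. affine_fun f \<and> (\<forall>x\<in>verts E. f x = v x)"
  shows "affine_fun F \<and> (\<forall>x\<in>verts E. F x = v x)"
proof -
  obtain p q r where Ee: "E = (p, q, r)" by (cases E) auto
  have nc3: "\<not> collinear {p,q,r}" using nc Ee by (simp add: verts3)
  obtain f where f: "affine_fun f" "f p = v p" "f q = v q" "f r = v r" using aff_exists[OF nc3] by blast
  have ex: "affine_fun f \<and> (\<forall>x\<in>verts E. f x = v x)" using f Ee by (simp add: verts3)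
  have un: "g = f" if "affine_fun g \<and> (\<forall>x\<in>verts E. g x = v x)" for g
  proof -
    have "affine_fun g" "g p = f p" "g q = f q" "g r = f r" using that f Ee by (auto simp: verts3)
    then show ?thesis using aff_unique[OF nc3, of g f] f(1) by blast
  qed
  show ?thesis unfolding F_def using theI[of "\<lambda>f. affine_fun f \<and> (\<forall>x\<in>verts E. f x = v x)", OF ex un] by blast
qed

lemma affine_mid: "affine_fun F \<Longrightarrow> F (midpoint u v) = (F u + F v) / 2"
  unfolding affine_fun_def midpoint_def by (auto simp: inner_add_right field_simps)


fun gN :: "nat \<Rightarrow> nat" where
  "gN 0 = 3"
| "gN (Suc k) = 3 + gN k * gN k"

fun lev :: "point set \<Rightarrow> nat \<Rightarrow> point set" where
  "lev V 0 = V"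
| "lev V (Suc k) = V \<union> (\<lambda>(u, v). midpoint u v) ` (lev V k \<times> lev V k)"

lemma lev_sup: "V \<subseteq> lev V k"
  by (cases k) auto

lemma lev_card: "finite V \<Longrightarrow> card V \<le> 3 \<Longrightarrow> finite (lev V k) \<and> card (lev V k) \<le> gN k"
proof (induction k)
  case 0 then show ?case by simp
next
  case (Suc k)
  then have f: "finite (lev V k)" and c: "card (lev V k) \<le> gN k" by auto
  have "card (lev V (Suc k)) \<le> card V + card ((\<lambda>(u, v). midpoint u v) ` (lev V k \<times> lev V k))"
    by (simp add: card_Un_le)
  also have "\<dots> \<le> card V + card (lev V k \<times> lev V k)"
    using card_image_le[OF finite_cartesian_product[OF f f], of "\<lambda>(u, v). midpoint u v"] by linarith
  also have "\<dots> = card V + card (lev V k) * card (lev V k)" by (simp add: card_cartesian_product)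
  also have "\<dots> \<le> 3 + gN k * gN k" using Suc.prems c by (intro add_mono mult_le_mono) auto
  finally show ?case using f Suc.prems by simp
qed

lemma card3_le: "card {a, b, c} \<le> 3"
  by (simp add: card_insert_if)

lemma idx_lev:
  assumes I: "INV T par" and E: "E \<in> T"
  shows "idx_le T par k z \<Longrightarrow> z \<in> elem_nodes T E \<Longrightarrow> z \<in> lev (verts E) k"
proof (induction rule: idx_le.induct)
  case (proper z k)
  then have "z \<in> verts E" using elem_in_hull E unfolding proper_node_def by blast
  then show ?case using lev_sup by blast
next
  case (hanging z z' z'' k)
  show ?case
  proof (cases "z \<in> verts E")
    case True then show ?thesis using lev_sup by blast
  next
    case False
    then have "z \<in> hang_nodes T E" using hanging.prems unfolding hang_nodes_def by blast
    then obtain u v where uv: "par z = Some (u, v)" "u \<in> elem_nodes T E" "v \<in> elem_nodes T E" "z = midpoint u v"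
      using hang_parents[OF I E] by blast
    then have "u = z'" "v = z''" using hanging.hyps(2) by auto
    then have "z' \<in> lev (verts E) k" "z'' \<in> lev (verts E) k" using hanging.IH uv by auto
    then show ?thesis using uv \<open>u = z'\<close> \<open>v = z''\<close> by force
  qed
qed

lemma card_hang:
  assumes I: "INV T par" and E: "E \<in> T" and A: "admissible \<Lambda> T par"
  shows "finite (hang_nodes T E) \<and> card (hang_nodes T E) \<le> gN \<Lambda>"
proof -
  have sub: "hang_nodes T E \<subseteq> lev (verts E) \<Lambda>"
  proof
    fix z assume z: "z \<in> hang_nodes T E"
    then have "z \<in> nodes T" "z \<in> elem_nodes T E" unfolding hang_nodes_def elem_nodes_def by auto
    then show "z \<in> lev (verts E) \<Lambda>" using A idx_lev[OF I E] unfolding admissible_def by blast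
  qed
  have "finite (verts E)" "card (verts E) \<le> 3" by (auto simp: verts_def card3_le split: prod.splits)
  then have "finite (lev (verts E) \<Lambda>) \<and> card (lev (verts E) \<Lambda>) \<le> gN \<Lambda>" by (rule lev_card)
  then show ?thesis using sub by (meson card_mono le_trans rev_finite_subset)
qed

lemma sq3: "((a::real) + b + c)^2 \<le> 3 * (a^2 + b^2 + c^2)"
proof -
  have "3 * (a^2 + b^2 + c^2) - (a + b + c)^2 = (a - b)^2 + (b - c)^2 + (a - c)^2"
    by (simp add: power2_eq_square algebra_simps)
  moreover have "(a - b)^2 + (b - c)^2 + (a - c)^2 \<ge> 0" by simp
  ultimately show ?thesis by linarith
qed


lemma abs3: "\<bar>(a::real) + (b + c) / 2\<bar> \<le> \<bar>a\<bar> + (\<bar>b\<bar> + \<bar>c\<bar>) / 2"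
proof -
  have "\<bar>a + (b + c) / 2\<bar> \<le> \<bar>a\<bar> + \<bar>(b + c) / 2\<bar>" by (rule abs_triangle_ineq)
  moreover have "\<bar>(b + c) / 2\<bar> = \<bar>b + c\<bar> / 2" by simp
  moreover have "\<bar>b + c\<bar> / 2 \<le> (\<bar>b\<bar> + \<bar>c\<bar>) / 2"
    by (rule divide_right_mono) (simp_all add: abs_triangle_ineq)
  ultimately show ?thesis by (metis add_left_mono order_trans)
qed

lemma VE_P1: "VE_space T E V \<Longrightarrow> P1 E \<subseteq> V"
  unfolding VE_space_def by (elim conjE)

lemma VE_add: "VE_space T E V \<Longrightarrow> v \<in> V \<Longrightarrow> w \<in> V \<Longrightarrow> (\<lambda>x. v x + w x) \<in> V"
  unfolding VE_space_def by (elim conjE) blast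

lemma VE_smul: "VE_space T E V \<Longrightarrow> v \<in> V \<Longrightarrow> (\<lambda>x. c * v x) \<in> V"
  unfolding VE_space_def by (elim conjE) blast

lemma main_bounds:
  fixes cs Cs :: real
  assumes cs: "0 < cs" and Cs: "0 < Cs"
    and I: "INV T par" and A: "admissible \<Lambda> T par" and E: "E \<in> T"
    and VE: "VE_space T E V" and ST: "stability_assm cs Cs T E V" and vV: "v \<in> V"
  shows "(\<Sum>x\<in>hang_nodes T E. (detail par E v x)^2)
           \<le> (5 * real (gN \<Lambda>) * Cs + 1) * h1_semi_sq E (\<lambda>y. v y - interp E v y) \<and>
       h1_semi_sq E (\<lambda>y. v y - interp E v y)
           \<le> (real (gN \<Lambda>) * (real \<Lambda>)^2 / cs + 1) * (\<Sum>x\<in>hang_nodes T E. (detail par E v x)^2)"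
proof -
  define G where "G = real (gN \<Lambda>)"
  define F where "F = (THE f. affine_fun f \<and> (\<forall>x\<in>verts E. f x = v x))"
  have nc: "\<not> collinear (verts E)" using inv_nc[OF I E] .
  have hF: "affine_fun F" "\<forall>x\<in>verts E. F x = v x" using interp_THE[OF nc, of v] unfolding F_def by auto
  have iE: "interp E v = restr E F" unfolding interp_def F_def ..
  define w where "w = (\<lambda>y. v y - interp E v y)"
  have "restr E F \<in> P1 E" using hF(1) unfolding P1_def by blast
  then have rV: "restr E F \<in> V" using VE_P1[OF VE] by blast
  have "(\<lambda>x. (-1) * restr E F x) \<in> V" using VE_smul[OF VE rV] .
  then have "(\<lambda>x. v x + (\<lambda>x. (-1) * restr E F x) x) \<in> V" using VE_add[OF VE vV] by blast
  moreover have "(\<lambda>x. v x + (\<lambda>x. (-1) * restr E F x) x) = w" unfolding w_def iE by (simp add: fun_eq_iff)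
  ultimately have wV: "w \<in> V" by simp
  have whull: "\<And>x. x \<in> tri_hull E \<Longrightarrow> w x = v x - F x" unfolding w_def iE restr_def by simp
  have w0: "\<forall>x\<in>verts E. w x = 0" using whull vert_in_hull hF(2) by simp
  define h where "h = h1_semi_sq E w"
  define S where "S = stab_form T E w w"
  have stab: "cs * h \<le> S" "S \<le> Cs * h" using ST wV w0 unfolding stability_assm_def h_def S_def by blast+
  define H where "H = hang_nodes T E"
  have finH: "finite H" and cardH: "card H \<le> gN \<Lambda>" using card_hang[OF I E A] unfolding H_def by auto
  have finEl: "finite (elem_nodes T E)" using inv_finite_nodes[OF I] unfolding elem_nodes_def by simp
  have HEl: "H \<subseteq> elem_nodes T E" unfolding H_def hang_nodes_def by auto
  have S_eq: "S = (\<Sum>x\<in>H. (w x)^2)"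
  proof -
    have "S = (\<Sum>x\<in>elem_nodes T E. w x * w x)" unfolding S_def stab_form_def ..
    also have "\<dots> = (\<Sum>x\<in>H. w x * w x)"
      using finEl HEl w0 by (intro sum.mono_neutral_right) (auto simp: H_def hang_nodes_def)
    finally show ?thesis by (simp add: power2_eq_square)
  qed
  have S0: "0 \<le> S" unfolding S_eq by (simp add: sum_nonneg)
  have wle: "(w x)^2 \<le> S" if "x \<in> elem_nodes T E" for x
  proof -
    have "(w x)^2 = w x * w x" by (simp add: power2_eq_square)
    also have "\<dots> \<le> (\<Sum>x\<in>elem_nodes T E. w x * w x)"
      using finEl that by (intro member_le_sum) auto
    finally show ?thesis unfolding S_def stab_form_def .
  qed
  have det: "\<exists>u u'. par z = Some (u, u') \<and> u \<in> elem_nodes T E \<and> u' \<in> elem_nodes T E \<and>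
               detail par E v z = w z - (w u + w u') / 2" if z: "z \<in> H" for z
  proof -
    obtain u u' where uu: "par z = Some (u, u')" "u \<in> elem_nodes T E" "u' \<in> elem_nodes T E" "z = midpoint u u'"
      using hang_parents[OF I E] z unfolding H_def by blast
    have zv: "z \<notin> verts E" using z unfolding H_def hang_nodes_def by blast
    have zh: "z \<in> tri_hull E" using z HEl elem_in_hull by blast
    have Fz: "F z = (F u + F u') / 2" using affine_mid[OF hF(1)] uu(4) by simp
    have "detail par E v z = v z - (v u + v u') / 2" unfolding detail_def using zv uu(1) by simp
    also have "\<dots> = w z - (w u + w u') / 2"
      using whull[OF zh] whull[OF elem_in_hull[OF uu(2)]] whull[OF elem_in_hull[OF uu(3)]] Fz
      by (simp add: field_simps)
    finally show ?thesis using uu by blast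
  qed
  define Dt where "Dt = (\<Sum>x\<in>H. (detail par E v x)^2)"
  have D0: "0 \<le> Dt" unfolding Dt_def by (simp add: sum_nonneg)
  have h0: "0 \<le> h" using stab S0 Cs by (meson dual_order.trans zero_le_mult_iff not_le order_less_le)
  have G0: "0 \<le> G" unfolding G_def by simp
  have d5: "(detail par E v z)^2 \<le> 5 * S" if z: "z \<in> H" for z
  proof -
    obtain u u' where uu: "u \<in> elem_nodes T E" "u' \<in> elem_nodes T E" "detail par E v z = w z - (w u + w u') / 2"
      using det[OF z] by blast
    have "w z + (- w u / 2) + (- w u' / 2) = detail par E v z" unfolding uu(3) by (simp add: diff_divide_distrib add_divide_distrib)
    then have "(detail par E v z)^2 = (w z + (- w u / 2) + (- w u' / 2))^2" by simp
    also have "\<dots> \<le> 3 * ((w z)^2 + (- w u / 2)^2 + (- w u' / 2)^2)" by (rule sq3)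
    also have "\<dots> = 3 * ((w z)^2 + (w u)^2 / 4 + (w u')^2 / 4)" by (simp add: power_divide)
    also have "\<dots> \<le> 3 * (S + S / 4 + S / 4)"
      using wle[OF uu(1)] wle[OF uu(2)] wle HEl z by (intro mult_left_mono add_mono divide_right_mono) auto
    also have "\<dots> \<le> 5 * S" using S0 by simp
    finally show ?thesis .
  qed
  have "Dt \<le> of_nat (card H) * (5 * S)" unfolding Dt_def using d5 by (rule sum_bounded_above)
  also have "\<dots> \<le> G * (5 * S)" using cardH S0 unfolding G_def by (intro mult_right_mono) auto
  also have "\<dots> \<le> G * (5 * (Cs * h))" using stab G0 by (intro mult_left_mono) auto
  also have "\<dots> \<le> (5 * G * Cs + 1) * h" using h0 by (simp add: algebra_simps)
  finally have dir1: "Dt \<le> (5 * G * Cs + 1) * h" .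
  have dsq: "\<bar>detail par E v z\<bar> \<le> sqrt Dt" if z: "z \<in> H" for z
  proof -
    have "(detail par E v z)^2 \<le> Dt" unfolding Dt_def using finH z by (intro member_le_sum) auto
    then have "sqrt ((detail par E v z)^2) \<le> sqrt Dt" by (rule real_sqrt_le_mono)
    then show ?thesis by simp
  qed
  have bound: "idx_le T par k z \<Longrightarrow> z \<in> elem_nodes T E \<Longrightarrow> \<bar>w z\<bar> \<le> real k * sqrt Dt" for k z
  proof (induction rule: idx_le.induct)
    case (proper z k)
    then have "z \<in> verts E" using elem_in_hull E unfolding proper_node_def by blast
    then show ?case using w0 D0 by simp
  next
    case (hanging z z' z'' k)
    show ?case
    proof (cases "z \<in> verts E")
      case True then show ?thesis using w0 D0 by simp
    next
      case False
      then have zH: "z \<in> H" using hanging.prems unfolding H_def hang_nodes_def by blast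
      obtain u u' where uu: "par z = Some (u, u')" "u \<in> elem_nodes T E" "u' \<in> elem_nodes T E"
          "detail par E v z = w z - (w u + w u') / 2"
        using det[OF zH] by blast
      then have e: "u = z'" "u' = z''" using hanging.hyps(2) by auto
      have b1: "\<bar>w z'\<bar> \<le> real k * sqrt Dt" "\<bar>w z''\<bar> \<le> real k * sqrt Dt"
        using hanging.IH uu(2,3) e by auto
      have "w z = detail par E v z + (w z' + w z'') / 2" using uu(4) e by simp
      then have "\<bar>w z\<bar> \<le> \<bar>detail par E v z\<bar> + (\<bar>w z'\<bar> + \<bar>w z''\<bar>) / 2" using abs3 by simp
      also have "\<dots> \<le> sqrt Dt + (real k * sqrt Dt + real k * sqrt Dt) / 2"
        using dsq[OF zH] b1 by (intro add_mono divide_right_mono) auto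
      also have "\<dots> = real (Suc k) * sqrt Dt" by (simp add: algebra_simps)
      finally show ?thesis .
    qed
  qed
  have wsq: "(w z)^2 \<le> (real \<Lambda>)^2 * Dt" if z: "z \<in> H" for z
  proof -
    have "z \<in> nodes T" "z \<in> elem_nodes T E" using z unfolding H_def hang_nodes_def elem_nodes_def by auto
    then have "\<bar>w z\<bar> \<le> real \<Lambda> * sqrt Dt" using bound A unfolding admissible_def by blast
    then have "\<bar>w z\<bar>^2 \<le> (real \<Lambda> * sqrt Dt)^2" by (rule power_mono) simp
    then show ?thesis using D0 by (simp add: power_mult_distrib)
  qed
  have "cs * h \<le> S" using stab by simp
  also have "S \<le> of_nat (card H) * ((real \<Lambda>)^2 * Dt)" unfolding S_eq using wsq by (rule sum_bounded_above)
  also have "\<dots> \<le> G * ((real \<Lambda>)^2 * Dt)" using cardH D0 unfolding G_def by (intro mult_right_mono) auto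
  finally have "cs * h \<le> G * (real \<Lambda>)^2 * Dt" by (simp add: algebra_simps)
  then have "h \<le> G * (real \<Lambda>)^2 * Dt / cs" using cs by (simp add: field_simps)
  also have "\<dots> \<le> (G * (real \<Lambda>)^2 / cs + 1) * Dt" using D0 by (simp add: algebra_simps)
  finally have dir2: "h \<le> (G * (real \<Lambda>)^2 / cs + 1) * Dt" .
  show ?thesis using dir1 dir2 unfolding Dt_def H_def h_def w_def G_def by simp
qed

theorem lemma7p1:
  fixes T0 :: "tri set" and \<Lambda> :: nat and cs Cs :: real
  assumes "initial_triangulation T0" and "0 < cs" and "0 < Cs"
  shows "\<exists>C1>0. \<exists>C2>0. \<forall>T par E V v.
     nvb_reach T0 T par \<and> admissible \<Lambda> T par \<and> E \<in> T \<and>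
     VE_space T E V \<and> stability_assm cs Cs T E V \<and> v \<in> V \<longrightarrow>
       (\<Sum>x\<in>hang_nodes T E. (detail par E v x)^2)
           \<le> C1 * h1_semi_sq E (\<lambda>y. v y - interp E v y) \<and>
       h1_semi_sq E (\<lambda>y. v y - interp E v y)
           \<le> C2 * (\<Sum>x\<in>hang_nodes T E. (detail par E v x)^2)"
proof -
  have "0 \<le> 5 * real (gN \<Lambda>) * Cs" using assms(3) by simp
  then have p1: "0 < 5 * real (gN \<Lambda>) * Cs + 1" by linarith
  have "0 \<le> real (gN \<Lambda>) * (real \<Lambda>)^2 / cs" using assms(2) by simp
  then have p2: "0 < real (gN \<Lambda>) * (real \<Lambda>)^2 / cs + 1" by linarith
  show ?thesis
    apply (rule exI[of _ "5 * real (gN \<Lambda>) * Cs + 1"], rule conjI[OF p1])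
    apply (rule exI[of _ "real (gN \<Lambda>) * (real \<Lambda>)^2 / cs + 1"], rule conjI[OF p2])
    using main_bounds[OF assms(2,3)] inv_reach[OF _ assms(1)] by blast
qed


end
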